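(* Let $n\in\mathbb N$, let $\psi\colon\mathbb R\to\mathbb R$ be a $C^n$ function whose $n$-th derivative $\psi^{(n)}$ is not identically zero, and let $p\colon\mathbb R^m\to\mathbb R^r$ be a polynomial map of degree at most $n$. Let $\mathcal A=(d_0,\dots,d_k,\psi)$ be a neural network architecture with $d_0=m$, $d_k=r$ and activation function $\psi$, such that there is a hidden layer $0<i<k$ with $d_i\ge r\left(\binom{n+m}{m}-m\right)$, $\min(d_0,\dots,d_{i-1})\ge d_0$, and $\min(d_{i+1},\dots,d_k)\ge d_k$. Then $p$ can be approximated uniformly on compact subsets of $\mathbb R^m$ by responses $\mathcal N^{\mathcal A}_\theta$, $\theta\in\mathbb R^{d(\mathcal A)}$; that is, there is a sequence $(\theta_j)$ in $\mathbb R^{d(\mathcal A)}$ with $\mathcal N^{\mathcal A}_{\theta_j}\to p$ uniformly on compact sets.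
   Context: A neural network architecture is $\mathcal A=(d_0,\dots,d_k,\psi)$ with positive integers $d_i$ and $\psi\colon\mathbb R\to\mathbb R$; $d(\mathcal A)=\sum_{i=1}^kd_i(d_{i-1}+1)$; $\theta\in\mathbb R^{d(\mathcal A)}$ is identified with $(W_1,b_1,\dots,W_k,b_k)$, $W_i\in\mathbb R^{d_i\times d_{i-1}},b_i\in\mathbb R^{d_i}$; the response is $\mathcal N^{\mathcal A}_\theta=f_k\circ\dots\circ f_1\colon\mathbb R^{d_0}\to\mathbb R^{d_k}$ with $f_i(x)=\psi^{(d_i)}(W_ix+b_i)$ for $i<k$ ($\psi$ applied componentwise) and $f_k(x)=W_kx+b_k$. Layers $1,\dots,k-1$ are the hidden layers. *)

theory Defs
  imports "HOL-Analysis.Analysis"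
begin

text \<open>Vectors in R^d are represented as functions nat => real; only the
  coordinates 0..d-1 are meaningful.  R^m itself is the subset
  {x. \<forall>i\<ge>m. x i = 0} of nat => real (product topology).\<close>

definition euclid :: "nat \<Rightarrow> (nat \<Rightarrow> real) set" where
  "euclid m = {x. \<forall>i\<ge>m. x i = 0}"

definition C_n :: "nat \<Rightarrow> (real \<Rightarrow> real) \<Rightarrow> bool" where
  "C_n n \<psi> \<longleftrightarrow> (\<forall>k<n. \<forall>x. (deriv ^^ k) \<psi> differentiable at x)
                   \<and> continuous_on UNIV ((deriv ^^ n) \<psi>)"

definition multi_indices :: "nat \<Rightarrow> nat \<Rightarrow> (nat \<Rightarrow> nat) set" where
  "multi_indices m n = {\<alpha>. (\<forall>i\<ge>m. \<alpha> i = 0) \<and> (\<Sum>i<m. \<alpha> i) \<le> n}"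

definition poly_map :: "nat \<Rightarrow> nat \<Rightarrow> nat \<Rightarrow> ((nat \<Rightarrow> nat) \<Rightarrow> nat \<Rightarrow> real)
                        \<Rightarrow> (nat \<Rightarrow> real) \<Rightarrow> (nat \<Rightarrow> real)" where
  "poly_map m r n c x = (\<lambda>j. if j < r then
      (\<Sum>\<alpha>\<in>multi_indices m n. c \<alpha> j * (\<Prod>i<m. x i ^ \<alpha> i)) else 0)"

definition affine_layer :: "nat \<Rightarrow> nat \<Rightarrow> (nat \<Rightarrow> nat \<Rightarrow> real) \<Rightarrow> (nat \<Rightarrow> real)
                            \<Rightarrow> (nat \<Rightarrow> real) \<Rightarrow> (nat \<Rightarrow> real)" where
  "affine_layer din dout W b x = (\<lambda>i. if i < dout then (\<Sum>j<din. W i j * x j) + b i else 0)"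

text \<open>Response of the network with architecture (d_0,...,d_k, psi), given as the
  dimension list ds = [d_0,...,d_k] and parameters
  theta = [(W_1,b_1),...,(W_k,b_k)]  (so length theta = k = length ds - 1).\<close>
fun nn_response :: "(real \<Rightarrow> real) \<Rightarrow> nat list \<Rightarrow> ((nat \<Rightarrow> nat \<Rightarrow> real) \<times> (nat \<Rightarrow> real)) list
                     \<Rightarrow> (nat \<Rightarrow> real) \<Rightarrow> (nat \<Rightarrow> real)" where
  "nn_response \<psi> (d0 # d1 # ds) (Wb # \<theta>) x =
     (let y = affine_layer d0 d1 (fst Wb) (snd Wb) x in
      if ds = [] then y
      else nn_response \<psi> (d1 # ds) \<theta> (\<lambda>i. if i < d1 then \<psi> (y i) else 0))"
| "nn_response \<psi> _ _ x = x"

end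

theory Submission
  imports Defs
begin


lemma isCont_eps:
  fixes f :: "real \<Rightarrow> real"
  assumes "isCont f x" "e > 0"
  shows "\<exists>\<delta>>0. \<forall>y. \<bar>y - x\<bar> < \<delta> \<longrightarrow> \<bar>f y - f x\<bar> < e"
  using assms unfolding continuous_at_eps_delta dist_real_def by blast

lemma C_n_deriv:
  assumes "C_n n \<psi>" "j < n"
  shows "((deriv ^^ j) \<psi> has_real_derivative (deriv ^^ Suc j) \<psi> x) (at x)"
proof -
  have "(deriv ^^ j) \<psi> differentiable at x" using assms unfolding C_n_def by blast
  then show ?thesis using DERIV_deriv_iff_real_differentiable by fastforce
qed

lemma C_n_cont:
  assumes "C_n n \<psi>" "j \<le> n"
  shows "isCont ((deriv ^^ j) \<psi>) x"
proof (cases "j < n")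
  case True
  then show ?thesis using C_n_deriv[OF assms(1) True] DERIV_isCont by blast
next
  case False
  then have "j = n" using assms by simp
  then show ?thesis using assms(1) unfolding C_n_def
    by (simp add: continuous_on_eq_continuous_at)
qed

lemma C_n_taylor:
  assumes "C_n n \<psi>" "1 \<le> j" "j \<le> n" "e > 0"
  shows "\<exists>\<delta>>0. \<forall>t. \<bar>t\<bar> < \<delta> \<longrightarrow>
     \<bar>\<psi> (b + t) - (\<Sum>l\<le>j. (deriv ^^ l) \<psi> b / fact l * t ^ l)\<bar> \<le> e * \<bar>t\<bar> ^ j"
proof -
  let ?D = "\<lambda>l. (deriv ^^ l) \<psi>"
  have "isCont (?D j) b" using C_n_cont assms by blast
  moreover have "e * fact j > 0" using assms by simp
  ultimately obtain \<delta> where d: "\<delta> > 0" "\<And>y. \<bar>y - b\<bar> < \<delta> \<Longrightarrow> \<bar>?D j y - ?D j b\<bar> < e * fact j"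
    using isCont_eps by blast
  have "\<forall>t. \<bar>t\<bar> < \<delta> \<longrightarrow>
     \<bar>\<psi> (b + t) - (\<Sum>l\<le>j. ?D l b / fact l * t ^ l)\<bar> \<le> e * \<bar>t\<bar> ^ j"
  proof (intro allI impI)
    fix t :: real assume t: "\<bar>t\<bar> < \<delta>"
    show "\<bar>\<psi> (b + t) - (\<Sum>l\<le>j. ?D l b / fact l * t ^ l)\<bar> \<le> e * \<bar>t\<bar> ^ j"
    proof (cases "t = 0")
      case True
      have "(\<Sum>l\<le>j. ?D l b / fact l * t ^ l) = (\<Sum>l\<in>{0}. ?D l b / fact l * t ^ l)"
        using True by (intro sum.mono_neutral_right) auto
      then show ?thesis using True assms(2) by (simp add: power_0_left)
    next
      case False
      have der: "\<forall>m s. m < j \<and> b - \<bar>t\<bar> \<le> s \<and> s \<le> b + \<bar>t\<bar> \<longrightarrow> DERIV (?D m) s :> ?D (Suc m) s"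
        using C_n_deriv[OF assms(1)] assms(3) by auto
      have tt: "b - \<bar>t\<bar> \<le> b + t" "b + t \<le> b + \<bar>t\<bar>" "b - \<bar>t\<bar> \<le> b" "b \<le> b + \<bar>t\<bar>" "b + t \<noteq> b"
        using False by auto
      have "\<exists>z. (if b + t < b then b + t < z \<and> z < b else b < z \<and> z < b + t) \<and>
        \<psi> (b + t) = (\<Sum>m<j. (?D m b / fact m) * (b + t - b)^m) + (?D j z / fact j) * (b + t - b)^j"
        by (rule Taylor[of j ?D \<psi> "b - \<bar>t\<bar>" "b + \<bar>t\<bar>" b "b + t", OF _ _ der tt(3) tt(4) tt(1) tt(2) tt(5)]) (use assms in auto)
      then obtain z where z: "(if b + t < b then b + t < z \<and> z < b else b < z \<and> z < b + t)"
        "\<psi> (b + t) = (\<Sum>m<j. (?D m b / fact m) * (b + t - b)^m) + (?D j z / fact j) * (b + t - b)^j"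
        by blast
      have zb: "\<bar>z - b\<bar> < \<delta>" using z(1) t by (auto split: if_splits)
      have "(\<Sum>l\<le>j. ?D l b / fact l * t ^ l) = (\<Sum>l<j. ?D l b / fact l * t ^ l) + ?D j b / fact j * t ^ j"
        by (simp add: lessThan_Suc_atMost[symmetric])
      then have "\<psi> (b + t) - (\<Sum>l\<le>j. ?D l b / fact l * t ^ l) = (?D j z - ?D j b) / fact j * t ^ j"
        using z(2) by (simp add: diff_divide_distrib left_diff_distrib)
      also have "\<bar>\<dots>\<bar> = \<bar>?D j z - ?D j b\<bar> / fact j * \<bar>t\<bar> ^ j"
        by (simp add: abs_mult power_abs)
      also have "\<dots> \<le> e * \<bar>t\<bar> ^ j"
      proof -
        have "\<bar>?D j z - ?D j b\<bar> / fact j \<le> e"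
          using d(2)[OF zb] by (simp add: divide_le_eq mult.commute)
        then show ?thesis by (intro mult_right_mono) auto
      qed
      finally show ?thesis .
    qed
  qed
  then show ?thesis using d(1) by blast
qed

lemma C_n_point:
  assumes "C_n n \<psi>" "\<exists>x. (deriv ^^ n) \<psi> x \<noteq> 0" "1 \<le> n"
  shows "\<exists>b. \<forall>j. 1 \<le> j \<and> j \<le> n \<longrightarrow> (deriv ^^ j) \<psi> b \<noteq> 0"
proof -
  let ?D = "\<lambda>l. (deriv ^^ l) \<psi>"
  have claim: "\<forall>l. l < n \<longrightarrow> (\<exists>a c. a < c \<and> (\<forall>y. a < y \<and> y < c \<longrightarrow> (\<forall>j. n - l \<le> j \<and> j \<le> n \<longrightarrow> ?D j y \<noteq> 0)))"
  proof (intro allI)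
    fix l show "l < n \<longrightarrow> (\<exists>a c. a < c \<and> (\<forall>y. a < y \<and> y < c \<longrightarrow> (\<forall>j. n - l \<le> j \<and> j \<le> n \<longrightarrow> ?D j y \<noteq> 0)))"
    proof (induction l)
      case 0
      obtain x0 where x0: "?D n x0 \<noteq> 0" using assms(2) by blast
      have "isCont (?D n) x0" using C_n_cont[OF assms(1)] by simp
      moreover have "\<bar>?D n x0\<bar> > 0" using x0 by simp
      ultimately obtain \<delta> where d: "\<delta> > 0" "\<And>y. \<bar>y - x0\<bar> < \<delta> \<Longrightarrow> \<bar>?D n y - ?D n x0\<bar> < \<bar>?D n x0\<bar>"
        using isCont_eps by blast
      have "\<forall>y. x0 - \<delta> < y \<and> y < x0 + \<delta> \<longrightarrow> (\<forall>j. n - 0 \<le> j \<and> j \<le> n \<longrightarrow> ?D j y \<noteq> 0)"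
      proof (intro allI impI)
        fix y j assume y: "x0 - \<delta> < y \<and> y < x0 + \<delta>" and j: "n - 0 \<le> j \<and> j \<le> n"
        then have "j = n" by simp
        have "\<bar>y - x0\<bar> < \<delta>" using y by auto
        from d(2)[OF this] show "?D j y \<noteq> 0" using \<open>j = n\<close> by auto
      qed
      then show ?case using d(1) by (intro impI exI[of _ "x0 - \<delta>"] exI[of _ "x0 + \<delta>"]) auto
    next
      case (Suc l)
      show ?case
      proof
        assume ln: "Suc l < n"
        then obtain a c where ac: "a < c" "\<And>y j. a < y \<Longrightarrow> y < c \<Longrightarrow> n - l \<le> j \<Longrightarrow> j \<le> n \<Longrightarrow> ?D j y \<noteq> 0"
          using Suc.IH by auto
        define j' where "j' = n - Suc l"
        have j'n: "j' < n" "Suc j' = n - l" using ln unfolding j'_def by auto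
        have nz: "\<And>y. a < y \<Longrightarrow> y < c \<Longrightarrow> ?D (Suc j') y \<noteq> 0" using ac(2) j'n by auto
        have der: "\<And>y. DERIV (?D j') y :> ?D (Suc j') y" using C_n_deriv[OF assms(1) j'n(1)] by blast
        have onez: "\<not> (a < z1 \<and> z1 < z2 \<and> z2 < c \<and> ?D j' z1 = 0 \<and> ?D j' z2 = 0)" for z1 z2
        proof
          assume h: "a < z1 \<and> z1 < z2 \<and> z2 < c \<and> ?D j' z1 = 0 \<and> ?D j' z2 = 0"
          then obtain z where z: "z1 < z" "z < z2" "?D j' z2 - ?D j' z1 = (z2 - z1) * ?D (Suc j') z"
            using MVT2[of z1 z2 "?D j'" "?D (Suc j')"] der by blast
          then have "?D (Suc j') z = 0" using h by simp
          then show False using nz[of z] z h by auto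
        qed
        define mid where "mid = (a + c) / 2"
        have good: "\<forall>y. lo < y \<and> y < hi \<longrightarrow> (\<forall>j. n - Suc l \<le> j \<and> j \<le> n \<longrightarrow> ?D j y \<noteq> 0)"
          if lh: "a \<le> lo" "hi \<le> c" and nz': "\<And>y. lo < y \<Longrightarrow> y < hi \<Longrightarrow> ?D j' y \<noteq> 0" for lo hi
        proof (intro allI impI)
          fix y j assume y: "lo < y \<and> y < hi" and j: "n - Suc l \<le> j \<and> j \<le> n"
          show "?D j y \<noteq> 0"
          proof (cases "j = j'")
            case True then show ?thesis using nz' y by auto
          next
            case False then have "n - l \<le> j" using j j'_def by auto
            then show ?thesis using ac(2)[of y j] y lh j by auto
          qed
        qed
        show "\<exists>a c. a < c \<and> (\<forall>y. a < y \<and> y < c \<longrightarrow> (\<forall>j. n - Suc l \<le> j \<and> j \<le> n \<longrightarrow> ?D j y \<noteq> 0))"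
        proof (cases "\<exists>z. a < z \<and> z < mid \<and> ?D j' z = 0")
          case True
          then obtain z where z: "a < z" "z < mid" "?D j' z = 0" by blast
          have "\<forall>y. mid < y \<and> y < c \<longrightarrow> (\<forall>j. n - Suc l \<le> j \<and> j \<le> n \<longrightarrow> ?D j y \<noteq> 0)"
            by (rule good) (use ac(1) onez[of z] z in \<open>auto simp: mid_def\<close>)
          then show ?thesis using ac(1) by (intro exI[of _ mid] exI[of _ c]) (auto simp: mid_def)
        next
          case False
          have "\<forall>y. a < y \<and> y < mid \<longrightarrow> (\<forall>j. n - Suc l \<le> j \<and> j \<le> n \<longrightarrow> ?D j y \<noteq> 0)"
            by (rule good) (use ac(1) False in \<open>auto simp: mid_def\<close>)
          then show ?thesis using ac(1) by (intro exI[of _ a] exI[of _ mid]) (auto simp: mid_def)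
        qed
      qed
    qed
  qed
  from claim[rule_format, of "n - 1"] assms(3) obtain a c where
    ac: "a < c" "\<And>y j. a < y \<Longrightarrow> y < c \<Longrightarrow> 1 \<le> j \<Longrightarrow> j \<le> n \<Longrightarrow> ?D j y \<noteq> 0" by auto
  show ?thesis using ac(2)[of "(a + c) / 2"] ac(1) by (intro exI[of _ "(a+c)/2"]) auto
qed


definition mdeg :: "nat \<Rightarrow> (nat \<Rightarrow> nat) \<Rightarrow> nat" where
  "mdeg m \<alpha> = (\<Sum>i<m. \<alpha> i)"

definition A2 :: "nat \<Rightarrow> nat \<Rightarrow> (nat \<Rightarrow> nat) set" where
  "A2 m n = {\<alpha> \<in> multi_indices m n. 2 \<le> mdeg m \<alpha>}"

definition tst :: "nat \<Rightarrow> (nat \<Rightarrow> nat) \<Rightarrow> (nat \<Rightarrow> nat) \<Rightarrow> real" where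
  "tst m \<gamma> \<beta> = (\<Prod>i<m. real (\<beta> i) ^ \<gamma> i)"

definition grepr :: "'g set \<Rightarrow> 'x set \<Rightarrow> ('g \<Rightarrow> 'x \<Rightarrow> real) \<Rightarrow> ('g \<Rightarrow> real) \<Rightarrow> bool" where
  "grepr G X T v \<longleftrightarrow> (\<exists>w. \<forall>\<gamma>\<in>G. v \<gamma> = (\<Sum>x\<in>X. w x * T \<gamma> x))"

lemma grepr_cong: "grepr G X T u \<Longrightarrow> (\<And>\<gamma>. \<gamma> \<in> G \<Longrightarrow> v \<gamma> = u \<gamma>) \<Longrightarrow> grepr G X T v"
  unfolding grepr_def by auto

lemma grepr_zero: "grepr G X T (\<lambda>_. 0)"
  unfolding grepr_def by (intro exI[of _ "\<lambda>_. 0"]) auto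

lemma grepr_add: "grepr G X T u \<Longrightarrow> grepr G X T v \<Longrightarrow> grepr G X T (\<lambda>\<gamma>. u \<gamma> + v \<gamma>)"
  unfolding grepr_def
proof (elim exE)
  fix wu wv assume u: "\<forall>\<gamma>\<in>G. u \<gamma> = (\<Sum>x\<in>X. wu x * T \<gamma> x)" and v: "\<forall>\<gamma>\<in>G. v \<gamma> = (\<Sum>x\<in>X. wv x * T \<gamma> x)"
  show "\<exists>w. \<forall>\<gamma>\<in>G. u \<gamma> + v \<gamma> = (\<Sum>x\<in>X. w x * T \<gamma> x)"
    by (rule exI[of _ "\<lambda>x. wu x + wv x"]) (simp add: u v distrib_right sum.distrib)
qed

lemma grepr_scale: "grepr G X T v \<Longrightarrow> grepr G X T (\<lambda>\<gamma>. c * v \<gamma>)"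
  unfolding grepr_def
proof (elim exE)
  fix wv assume v: "\<forall>\<gamma>\<in>G. v \<gamma> = (\<Sum>x\<in>X. wv x * T \<gamma> x)"
  show "\<exists>w. \<forall>\<gamma>\<in>G. c * v \<gamma> = (\<Sum>x\<in>X. w x * T \<gamma> x)"
    by (rule exI[of _ "\<lambda>x. c * wv x"]) (simp add: v sum_distrib_left mult.assoc)
qed

lemma grepr_sum:
  assumes "finite S" "\<And>s. s \<in> S \<Longrightarrow> grepr G X T (f s)"
  shows "grepr G X T (\<lambda>\<gamma>. \<Sum>s\<in>S. f s \<gamma>)"
  using assms
proof (induction S rule: finite_induct)
  case empty then show ?case using grepr_zero by simp
next
  case (insert s S)
  have "grepr G X T (\<lambda>\<gamma>. f s \<gamma> + (\<Sum>s\<in>S. f s \<gamma>))"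
    using insert by (intro grepr_add) auto
  then show ?case using insert by simp
qed

lemma grepr_node:
  assumes "x0 \<in> X" "finite X"
  shows "grepr G X T (\<lambda>\<gamma>. T \<gamma> x0)"
  unfolding grepr_def
proof (intro exI[of _ "\<lambda>x. if x = x0 then 1 else 0"] ballI)
  fix \<gamma>
  have "(\<Sum>x\<in>X. (if x = x0 then 1 else 0) * T \<gamma> x) = (\<Sum>x\<in>X. if x = x0 then T \<gamma> x else 0)"
    by (rule sum.cong) auto
  also have "\<dots> = T \<gamma> x0" using assms by (simp add: sum.delta')
  finally show "T \<gamma> x0 = (\<Sum>x\<in>X. (if x = x0 then 1 else 0) * T \<gamma> x)" by simp
qed

subsection \<open>Finite differences\<close>

fun Dif :: "nat \<Rightarrow> (nat \<Rightarrow> real) \<Rightarrow> real" where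
  "Dif 0 g = g 0"
| "Dif (Suc a) g = Dif a (\<lambda>j. g (Suc j) - g j)"

lemma Dif_diff: "Dif a (\<lambda>j. f j - g j) = Dif a f - Dif a g"
proof (induction a arbitrary: f g)
  case 0 then show ?case by simp
next
  case (Suc a)
  have "Dif (Suc a) (\<lambda>j. f j - g j) = Dif a (\<lambda>j. (f (Suc j) - f j) - (g (Suc j) - g j))"
    by (simp add: algebra_simps)
  then show ?case using Suc by simp
qed

lemma Dif_scale: "Dif a (\<lambda>j. c * f j) = c * Dif a f"
proof (induction a arbitrary: f)
  case 0 then show ?case by simp
next
  case (Suc a)
  have "Dif (Suc a) (\<lambda>j. c * f j) = Dif a (\<lambda>j. c * (f (Suc j) - f j))"
    by (simp add: algebra_simps)
  then show ?case using Suc by simp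
qed

lemma Dif_sum: "finite S \<Longrightarrow> Dif a (\<lambda>j. \<Sum>s\<in>S. f s j) = (\<Sum>s\<in>S. Dif a (f s))"
proof (induction a arbitrary: f)
  case 0 then show ?case by simp
next
  case (Suc a)
  have "Dif (Suc a) (\<lambda>j. \<Sum>s\<in>S. f s j) = Dif a (\<lambda>j. \<Sum>s\<in>S. f s (Suc j) - f s j)"
    by (simp add: sum_subtractf)
  then show ?case using Suc by simp
qed

lemma Dif_comb: "\<exists>w. \<forall>g. Dif a g = (\<Sum>j\<le>a. w j * g j)"
proof (induction a)
  case 0 then show ?case by (intro exI[of _ "\<lambda>_. 1"]) simp
next
  case (Suc a)
  then obtain w where w: "\<And>g. Dif a g = (\<Sum>j\<le>a. w j * g j)" by blast
  define w' where "w' j = (if 0 < j then w (j - 1) else 0) - (if j \<le> a then w j else 0)" for j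
  have "Dif (Suc a) g = (\<Sum>j\<le>Suc a. w' j * g j)" for g
  proof -
    have "Dif (Suc a) g = (\<Sum>j\<le>a. w j * g (Suc j)) - (\<Sum>j\<le>a. w j * g j)"
      by (simp add: w right_diff_distrib sum_subtractf)
    also have "(\<Sum>j\<le>a. w j * g (Suc j)) = (\<Sum>j\<le>Suc a. (if 0 < j then w (j - 1) else 0) * g j)"
      by (subst sum.atMost_Suc_shift) simp
    also have "(\<Sum>j\<le>a. w j * g j) = (\<Sum>j\<le>Suc a. (if j \<le> a then w j else 0) * g j)"
      by (simp add: sum.atMost_Suc)
    finally show ?thesis by (simp add: w'_def left_diff_distrib sum_subtractf)
  qed
  then show ?case by blast
qed

lemma pow_Suc_diff: "real (Suc j) ^ c - real j ^ c = (\<Sum>l<c. real (c choose l) * real j ^ l)"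
proof -
  have "real (Suc j) ^ c = (real j + 1) ^ c" by (simp add: add.commute)
  also have "\<dots> = (\<Sum>l\<le>c. real (c choose l) * real j ^ l)"
    by (simp add: binomial_ring)
  also have "\<dots> = (\<Sum>l<c. real (c choose l) * real j ^ l) + real j ^ c"
    by (simp add: lessThan_Suc_atMost[symmetric])
  finally show ?thesis by simp
qed

lemma Dif_pow: "c \<le> a \<Longrightarrow> Dif a (\<lambda>j. real j ^ c) = (if c = a then fact a else 0)"
proof (induction a arbitrary: c)
  case 0 then show ?case by simp
next
  case (Suc a)
  have eq: "(\<lambda>j. real (Suc j) ^ c - real j ^ c) = (\<lambda>j. \<Sum>l<c. real (c choose l) * real j ^ l)"
    by (rule ext) (rule pow_Suc_diff)
  have "Dif (Suc a) (\<lambda>j. real j ^ c) = Dif a (\<lambda>j. \<Sum>l<c. real (c choose l) * real j ^ l)"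
    by (simp only: Dif.simps eq)
  also have "\<dots> = (\<Sum>l<c. real (c choose l) * Dif a (\<lambda>j. real j ^ l))"
    by (simp add: Dif_sum Dif_scale)
  also have "\<dots> = (\<Sum>l<c. real (c choose l) * (if l = a then fact a else 0))"
    using Suc.prems by (intro sum.cong refl) (simp add: Suc.IH)
  also have "\<dots> = (if c = Suc a then fact (Suc a) else 0)"
  proof (cases "c = Suc a")
    case True
    have "(\<Sum>l<c. real (c choose l) * (if l = a then fact a else 0)) = (\<Sum>l<c. if l = a then real (c choose l) * fact a else 0)"
      by (rule sum.cong) auto
    also have "\<dots> = real (Suc a choose a) * fact a" using True by (simp add: sum.delta')
    also have "\<dots> = fact (Suc a)" by (simp add: binomial_Suc_n)
    finally show ?thesis using True by simp
  next
    case False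
    then have "c \<le> a" using Suc.prems by simp
    then show ?thesis using False by (intro trans[OF sum.neutral]) auto
  qed
  finally show ?case .
qed

lemma Dif_shift_pow: "e < a \<Longrightarrow> Dif a (\<lambda>j. (real j + 1) ^ e) = 0"
proof -
  assume e: "e < a"
  have "Dif a (\<lambda>j. (real j + 1) ^ e) = Dif a (\<lambda>j. \<Sum>l\<le>e. real (e choose l) * real j ^ l)"
    by (simp add: binomial_ring)
  also have "\<dots> = (\<Sum>l\<le>e. real (e choose l) * Dif a (\<lambda>j. real j ^ l))"
    by (simp add: Dif_sum Dif_scale)
  also have "\<dots> = 0" using e by (intro sum.neutral) (simp add: Dif_pow)
  finally show ?thesis .
qed

lemma Dif_telescope: "(\<Sum>l\<le>L. (-1) ^ l * Dif l (\<lambda>j. g (Suc j))) = g 0 + (-1) ^ L * Dif (Suc L) g"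
proof (induction L)
  case 0 then show ?case by simp
next
  case (Suc L)
  have "Dif (Suc L) (\<lambda>j. g (Suc j)) - Dif (Suc L) g = Dif (Suc (Suc L)) g"
    using Dif_diff[of "Suc L" "\<lambda>j. g (Suc j)" g] by simp
  then show ?case using Suc by (simp add: algebra_simps)
qed

lemma V1:
  assumes "2 \<le> n"
  shows "grepr {2..n} {2..n} (\<lambda>a j. real j ^ a) (\<lambda>_. 1)"
proof -
  obtain W where W: "\<And>l g. Dif l g = (\<Sum>j\<le>l. W l j * g j)"
    using Dif_comb by metis
  let ?T = "\<lambda>a j. real j ^ a"
  have key: "1 = (\<Sum>l\<le>n-2. (-1) ^ l * (\<Sum>j\<le>l. W l j * (1 / real (j + 2) ^ 2) * ?T a (j + 2)))"
    if a: "a \<in> {2..n}" for a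
  proof -
    let ?g = "\<lambda>j. (real j + 1) ^ (a - 2)"
    have "(\<Sum>l\<le>n-2. (-1) ^ l * Dif l (\<lambda>j. ?g (Suc j))) = ?g 0 + (-1) ^ (n-2) * Dif (Suc (n-2)) ?g"
      by (rule Dif_telescope)
    also have "Dif (Suc (n-2)) ?g = 0" using a by (intro Dif_shift_pow) auto
    finally have "1 = (\<Sum>l\<le>n-2. (-1) ^ l * Dif l (\<lambda>j. ?g (Suc j)))" by simp
    also have "\<dots> = (\<Sum>l\<le>n-2. (-1) ^ l * (\<Sum>j\<le>l. W l j * (1 / real (j + 2) ^ 2) * ?T a (j + 2)))"
    proof (intro sum.cong refl)
      fix l
      have "?g (Suc j) = (1 / real (j + 2) ^ 2) * ?T a (j + 2)" for j
      proof -
        have a2: "2 \<le> a" using a by simp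
        have "?T a (j + 2) = real (j+2) ^ 2 * real (j + 2) ^ (a - 2)"
          by (simp only: power_add[symmetric] le_add_diff_inverse[OF a2])
        then show ?thesis by (simp add: add.commute)
      qed
      then show "(-1) ^ l * Dif l (\<lambda>j. ?g (Suc j)) = (-1) ^ l * (\<Sum>j\<le>l. W l j * (1 / real (j + 2) ^ 2) * ?T a (j + 2))"
        by (simp add: W mult.assoc)
    qed
    finally show ?thesis .
  qed
  have "grepr {2..n} {2..n} ?T (\<lambda>a. \<Sum>l\<le>n-2. (-1) ^ l * (\<Sum>j\<le>l. W l j * (1 / real (j + 2) ^ 2) * ?T a (j + 2)))"
  proof (rule grepr_sum[OF finite_atMost])
    fix l assume l: "l \<in> {..n-2}"
    show "grepr {2..n} {2..n} ?T (\<lambda>a. (-1) ^ l * (\<Sum>j\<le>l. W l j * (1 / real (j + 2) ^ 2) * ?T a (j + 2)))"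
    proof (rule grepr_scale, rule grepr_sum[OF finite_atMost])
      fix j assume "j \<in> {..l}"
      then have "j + 2 \<in> {2..n}" using assms l by auto
      then show "grepr {2..n} {2..n} ?T (\<lambda>a. W l j * (1 / real (j + 2) ^ 2) * ?T a (j + 2))"
        by (intro grepr_scale grepr_node) auto
    qed
  qed
  then show ?thesis using key by (rule grepr_cong)
qed


abbreviation repr :: "nat \<Rightarrow> nat \<Rightarrow> ((nat \<Rightarrow> nat) \<Rightarrow> real) \<Rightarrow> bool" where
  "repr m n v \<equiv> grepr (A2 m n) (A2 m n) (tst m) v"

lemma mi_iff: "\<alpha> \<in> multi_indices m n \<longleftrightarrow> (\<forall>i\<ge>m. \<alpha> i = 0) \<and> mdeg m \<alpha> \<le> n"
  unfolding multi_indices_def mdeg_def by auto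

lemma finite_mi: "finite (multi_indices m n)"
proof -
  have "multi_indices m n \<subseteq> {f. \<forall>x. (x \<in> {..<m} \<longrightarrow> f x \<in> {..n}) \<and> (x \<notin> {..<m} \<longrightarrow> f x = 0)}"
  proof (intro subsetI CollectI allI conjI impI)
    fix f x assume f: "f \<in> multi_indices m n" and x: "x \<in> {..<m}"
    have "f x \<le> (\<Sum>i<m. f i)" using x by (intro member_le_sum) auto
    then show "f x \<in> {..n}" using f by (auto simp: multi_indices_def)
  next
    fix f x assume "f \<in> multi_indices m n" "x \<notin> {..<m}"
    then show "f x = 0" by (auto simp: multi_indices_def)
  qed
  moreover have "finite {f. \<forall>x. (x \<in> {..<m} \<longrightarrow> f x \<in> {..n}) \<and> (x \<notin> {..<m} \<longrightarrow> f x = (0::nat))}"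
    by (rule finite_set_of_finite_funs) auto
  ultimately show ?thesis by (rule finite_subset)
qed

lemma finite_A2: "finite (A2 m n)"
  using finite_mi by (rule finite_subset[rotated]) (auto simp: A2_def)

lemma A2_iff: "\<gamma> \<in> A2 m n \<longleftrightarrow> (\<forall>i\<ge>m. \<gamma> i = 0) \<and> mdeg m \<gamma> \<le> n \<and> 2 \<le> mdeg m \<gamma>"
  by (auto simp: A2_def mi_iff)

lemma nonzero_coord: "0 < mdeg m \<gamma> \<Longrightarrow> \<exists>i<m. \<gamma> i \<noteq> 0"
  unfolding mdeg_def by (metis lessThan_iff sum.neutral less_irrefl)

lemma tst_zero: "\<gamma> \<in> A2 m n \<Longrightarrow> tst m \<gamma> (\<lambda>_. 0) = 0"
proof -
  assume "\<gamma> \<in> A2 m n"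
  then obtain i where "i < m" "\<gamma> i \<noteq> 0" using nonzero_coord[of m \<gamma>] by (auto simp: A2_iff)
  then show ?thesis unfolding tst_def by (intro prod_zero) auto
qed

lemma aux: "(x::real) * (if P then 1 else 0) = (if P then x else 0)"
  by simp

lemma tst_axis:
  assumes "i < m"
  shows "tst m \<gamma> (\<lambda>l. if l = i then j else 0) = (if (\<forall>l<m. l \<noteq> i \<longrightarrow> \<gamma> l = 0) then real j ^ \<gamma> i else 0)"
proof -
  have "tst m \<gamma> (\<lambda>l. if l = i then j else 0) = real j ^ \<gamma> i * (\<Prod>l\<in>{..<m} - {i}. real (if l = i then j else 0) ^ \<gamma> l)"
    unfolding tst_def using assms by (subst prod.remove[of _ i]) auto
  also have "(\<Prod>l\<in>{..<m} - {i}. real (if l = i then j else 0) ^ \<gamma> l) = (\<Prod>l\<in>{..<m} - {i}. 0 ^ \<gamma> l)"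
    by (rule prod.cong) auto
  also have "\<dots> = (if (\<forall>l<m. l \<noteq> i \<longrightarrow> \<gamma> l = 0) then 1 else 0)"
  proof (cases "\<forall>l<m. l \<noteq> i \<longrightarrow> \<gamma> l = 0")
    case True then show ?thesis by (simp add: prod.neutral)
  next
    case False then show ?thesis by (subst prod_zero) auto
  qed
  finally show ?thesis by (simp only: aux)
qed

lemma mdeg_axis:
  assumes "i < m" "\<forall>l<m. l \<noteq> i \<longrightarrow> \<gamma> l = 0"
  shows "mdeg m \<gamma> = \<gamma> i"
proof -
  have "mdeg m \<gamma> = \<gamma> i + (\<Sum>l\<in>{..<m} - {i}. \<gamma> l)"
    unfolding mdeg_def using assms by (subst sum.remove[of _ i]) auto
  also have "(\<Sum>l\<in>{..<m} - {i}. \<gamma> l) = 0" using assms by (intro sum.neutral) auto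
  finally show ?thesis by simp
qed

lemma axis_A2:
  assumes "i < m" "2 \<le> j" "j \<le> n"
  shows "(\<lambda>l. if l = i then j else 0) \<in> A2 m n"
proof -
  have "mdeg m (\<lambda>l. if l = i then j else 0) = j"
    using mdeg_axis[of i m "\<lambda>l. if l = i then j else 0"] assms by simp
  then show ?thesis using assms by (auto simp: A2_iff)
qed

lemma repr_unit:
  assumes "i < m"
  shows "repr m n (\<lambda>\<gamma>. tst m \<gamma> (\<lambda>l. if l = i then 1 else 0))"
proof (cases "2 \<le> n")
  case False
  then have "A2 m n = {}" by (auto simp: A2_iff)
  then show ?thesis by (simp add: grepr_def)
next
  case True
  obtain c where c: "\<And>a. a \<in> {2..n} \<Longrightarrow> 1 = (\<Sum>j\<in>{2..n}. c j * real j ^ a)"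
    using V1[OF True] unfolding grepr_def by metis
  have "repr m n (\<lambda>\<gamma>. \<Sum>j\<in>{2..n}. c j * tst m \<gamma> (\<lambda>l. if l = i then j else 0))"
  proof (rule grepr_sum[OF finite_atLeastAtMost])
    fix j assume "j \<in> {2..n}"
    then show "repr m n (\<lambda>\<gamma>. c j * tst m \<gamma> (\<lambda>l. if l = i then j else 0))"
      using axis_A2[OF assms] finite_A2 by (intro grepr_scale grepr_node) auto
  qed
  then show ?thesis
  proof (rule grepr_cong)
    fix \<gamma> assume g: "\<gamma> \<in> A2 m n"
    show "tst m \<gamma> (\<lambda>l. if l = i then 1 else 0) = (\<Sum>j\<in>{2..n}. c j * tst m \<gamma> (\<lambda>l. if l = i then j else 0))"
    proof (cases "\<forall>l<m. l \<noteq> i \<longrightarrow> \<gamma> l = 0")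
      case True
      then have "\<gamma> i \<in> {2..n}" using mdeg_axis[OF assms True] g by (auto simp: A2_iff)
      then show ?thesis using True c[of "\<gamma> i"] by (simp add: tst_axis[OF assms])
    next
      case False
      show ?thesis by (simp only: tst_axis[OF assms] if_not_P[OF False] mult_zero_right sum.neutral_const)
    qed
  qed
qed

lemma repr_lattice:
  assumes "\<beta> \<in> multi_indices m n"
  shows "repr m n (\<lambda>\<gamma>. tst m \<gamma> \<beta>)"
proof -
  have supp: "\<And>i. m \<le> i \<Longrightarrow> \<beta> i = 0" using assms by (auto simp: mi_iff)
  consider "mdeg m \<beta> = 0" | "mdeg m \<beta> = 1" | "2 \<le> mdeg m \<beta>" by linarith
  then show ?thesis
  proof cases
    case 1
    then have lo: "\<forall>i<m. \<beta> i = 0" by (simp add: mdeg_def)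
    have "\<beta> = (\<lambda>_. 0)"
    proof (rule ext)
      fix i show "\<beta> i = 0" using lo supp[of i] by (cases "i < m") auto
    qed
    then show ?thesis using tst_zero by (intro grepr_cong[OF grepr_zero]) auto
  next
    case 2
    then obtain i where i: "i < m" "\<beta> i \<noteq> 0" using nonzero_coord[of m \<beta>] by auto
    have "mdeg m \<beta> = \<beta> i + (\<Sum>l\<in>{..<m} - {i}. \<beta> l)"
      unfolding mdeg_def using i by (subst sum.remove[of _ i]) auto
    then have e: "\<beta> i + (\<Sum>l\<in>{..<m} - {i}. \<beta> l) = 1" using 2 by simp
    have bi: "\<beta> i = 1" using e i(2) by linarith
    have "(\<Sum>l\<in>{..<m} - {i}. \<beta> l) = 0" using e bi by linarith
    then have rest: "\<forall>l\<in>{..<m} - {i}. \<beta> l = 0" by simp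
    have "\<beta> = (\<lambda>l. if l = i then 1 else 0)"
    proof
      fix l show "\<beta> l = (if l = i then 1 else 0)"
      proof (cases "l = i")
        case True then show ?thesis using bi by simp
      next
        case False then show ?thesis using rest supp[of l] by (cases "l < m") auto
      qed
    qed
    then show ?thesis using repr_unit[OF i(1)] by simp
  next
    case 3
    then have "\<beta> \<in> A2 m n" using assms by (simp add: A2_def)
    then show ?thesis using finite_A2 by (intro grepr_node)
  qed
qed

definition rowD :: "nat \<Rightarrow> (nat \<Rightarrow> nat) \<Rightarrow> (nat \<Rightarrow> nat) \<Rightarrow> real" where
  "rowD m \<alpha> \<gamma> = (\<Prod>i<m. Dif (\<alpha> i) (\<lambda>j. real j ^ \<gamma> i))"

lemma repr_rowD:
  assumes "\<alpha> \<in> multi_indices m n"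
  shows "repr m n (rowD m \<alpha>)"
proof -
  obtain W where W: "\<And>a g. Dif a g = (\<Sum>j\<le>a. W a j * g j)"
    using Dif_comb by metis
  let ?P = "PiE {..<m} (\<lambda>i. {..\<alpha> i})"
  let ?ext = "\<lambda>g i. if i < m then g i else 0"
  have eq: "rowD m \<alpha> \<gamma> = (\<Sum>g\<in>?P. (\<Prod>i<m. W (\<alpha> i) (g i)) * tst m \<gamma> (?ext g))" for \<gamma>
  proof -
    have "rowD m \<alpha> \<gamma> = (\<Prod>i<m. \<Sum>j\<le>\<alpha> i. W (\<alpha> i) j * real j ^ \<gamma> i)"
      unfolding rowD_def by (simp add: W)
    also have "\<dots> = (\<Sum>g\<in>?P. \<Prod>i<m. W (\<alpha> i) (g i) * real (g i) ^ \<gamma> i)"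
      by (rule prod_sum_PiE) auto
    also have "\<dots> = (\<Sum>g\<in>?P. (\<Prod>i<m. W (\<alpha> i) (g i)) * tst m \<gamma> (?ext g))"
      unfolding tst_def by (intro sum.cong refl) (simp add: prod.distrib)
    finally show ?thesis .
  qed
  have fin: "finite ?P" by (rule finite_PiE) simp_all
  have each: "repr m n (\<lambda>\<gamma>. (\<Prod>i<m. W (\<alpha> i) (g i)) * tst m \<gamma> (?ext g))" if g: "g \<in> ?P" for g
  proof -
    have "?ext g \<in> multi_indices m n"
    proof -
      have "mdeg m (?ext g) = (\<Sum>i<m. g i)" by (simp add: mdeg_def)
      also have "\<dots> \<le> (\<Sum>i<m. \<alpha> i)"
      proof (rule sum_mono)
        fix i assume "i \<in> {..<m}"
        then show "g i \<le> \<alpha> i" using g by (simp add: PiE_iff)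
      qed
      also have "\<dots> \<le> n" using assms by (simp add: mi_iff mdeg_def)
      finally show ?thesis by (simp add: mi_iff)
    qed
    then have "repr m n (\<lambda>\<gamma>. tst m \<gamma> (?ext g))" by (rule repr_lattice)
    then show "repr m n (\<lambda>\<gamma>. (\<Prod>i<m. W (\<alpha> i) (g i)) * tst m \<gamma> (?ext g))"
      by (rule grepr_scale)
  qed
  have "repr m n (\<lambda>\<gamma>. \<Sum>g\<in>?P. (\<Prod>i<m. W (\<alpha> i) (g i)) * tst m \<gamma> (?ext g))"
    by (rule grepr_sum[OF fin each])
  then show ?thesis by (rule grepr_cong) (rule eq)
qed

lemma rowD_zero: "\<exists>i<m. \<gamma> i < \<alpha> i \<Longrightarrow> rowD m \<alpha> \<gamma> = 0"
proof -
  assume "\<exists>i<m. \<gamma> i < \<alpha> i"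
  then obtain i where i: "i < m" "\<gamma> i < \<alpha> i" by blast
  then have "Dif (\<alpha> i) (\<lambda>j. real j ^ \<gamma> i) = 0" using Dif_pow[of "\<gamma> i" "\<alpha> i"] by simp
  then show ?thesis unfolding rowD_def using i by (intro prod_zero) auto
qed

lemma rowD_diag: "rowD m \<alpha> \<alpha> \<noteq> 0"
  unfolding rowD_def by (simp add: Dif_pow)

lemma repr_delta:
  assumes "\<alpha> \<in> A2 m n"
  shows "repr m n (\<lambda>\<gamma>. if \<gamma> = \<alpha> then 1 else 0)"
  using assms
proof (induction "n - mdeg m \<alpha>" arbitrary: \<alpha> rule: less_induct)
  case less
  let ?R = "rowD m \<alpha>"
  let ?d = "\<lambda>\<eta> \<gamma>. if \<gamma> = \<eta> then 1 else (0::real)"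
  have a: "\<alpha> \<in> multi_indices m n" "2 \<le> mdeg m \<alpha>" using less.prems by (auto simp: A2_def)
  have rest: "repr m n (\<lambda>\<gamma>. \<Sum>\<eta>\<in>A2 m n - {\<alpha>}. ?R \<eta> * ?d \<eta> \<gamma>)"
  proof (rule grepr_sum)
    show "finite (A2 m n - {\<alpha>})" using finite_A2 by simp
  next
    fix \<eta> assume \<eta>: "\<eta> \<in> A2 m n - {\<alpha>}"
    show "repr m n (\<lambda>\<gamma>. ?R \<eta> * ?d \<eta> \<gamma>)"
    proof (cases "?R \<eta> = 0")
      case True then show ?thesis using grepr_zero by simp
    next
      case False
      have ge: "\<forall>i<m. \<alpha> i \<le> \<eta> i"
      proof (intro allI impI)
        fix i assume i: "i < m"
        show "\<alpha> i \<le> \<eta> i"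
        proof (rule ccontr)
          assume "\<not> \<alpha> i \<le> \<eta> i"
          then have "\<eta> i < \<alpha> i" by simp
          then have "?R \<eta> = 0" using rowD_zero[of m \<eta> \<alpha>] i by blast
          then show False using False by simp
        qed
      qed
      have "\<exists>i<m. \<alpha> i < \<eta> i"
      proof (rule ccontr)
        assume "\<not> (\<exists>i<m. \<alpha> i < \<eta> i)"
        then have "\<forall>i<m. \<eta> i = \<alpha> i" using ge by (meson antisym not_less)
        moreover have "\<forall>i\<ge>m. \<eta> i = \<alpha> i" using \<eta> less.prems by (auto simp: A2_iff)
        ultimately have "\<eta> = \<alpha>"
        proof -
          assume h1: "\<forall>i<m. \<eta> i = \<alpha> i" and h2: "\<forall>i\<ge>m. \<eta> i = \<alpha> i"
          show "\<eta> = \<alpha>"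
          proof (rule ext)
            fix i show "\<eta> i = \<alpha> i" using h1 h2 by (cases "i < m") auto
          qed
        qed
        then show False using \<eta> by simp
      qed
      then have "mdeg m \<alpha> < mdeg m \<eta>" unfolding mdeg_def
        using ge by (intro sum_strict_mono_ex1) auto
      moreover have "mdeg m \<eta> \<le> n" using \<eta> by (auto simp: A2_iff)
      ultimately have "n - mdeg m \<eta> < n - mdeg m \<alpha>" by linarith
      moreover have "\<eta> \<in> A2 m n" using \<eta> by simp
      ultimately have "repr m n (?d \<eta>)" by (rule less.hyps)
      then show ?thesis by (rule grepr_scale)
    qed
  qed
  have "repr m n (\<lambda>\<gamma>. (-1) * (\<Sum>\<eta>\<in>A2 m n - {\<alpha>}. ?R \<eta> * ?d \<eta> \<gamma>))"
    by (rule grepr_scale[OF rest])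
  then have "repr m n (\<lambda>\<gamma>. ?R \<gamma> + (-1) * (\<Sum>\<eta>\<in>A2 m n - {\<alpha>}. ?R \<eta> * ?d \<eta> \<gamma>))"
    by (rule grepr_add[OF repr_rowD[OF a(1)]])
  then have "repr m n (\<lambda>\<gamma>. (1 / ?R \<alpha>) * (?R \<gamma> + (-1) * (\<Sum>\<eta>\<in>A2 m n - {\<alpha>}. ?R \<eta> * ?d \<eta> \<gamma>)))"
    by (rule grepr_scale)
  then show ?case
  proof (rule grepr_cong)
    fix \<gamma> assume g: "\<gamma> \<in> A2 m n"
    have s: "(\<Sum>\<eta>\<in>A2 m n - {\<alpha>}. ?R \<eta> * ?d \<eta> \<gamma>) = (\<Sum>\<eta>\<in>A2 m n - {\<alpha>}. if \<gamma> = \<eta> then ?R \<eta> else 0)"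
      by (rule sum.cong) simp_all
    have s2: "(\<Sum>\<eta>\<in>A2 m n - {\<alpha>}. if \<gamma> = \<eta> then ?R \<eta> else 0) = (if \<gamma> \<in> A2 m n - {\<alpha>} then ?R \<gamma> else 0)"
      by (rule sum.delta'[OF finite_Diff[OF finite_A2]])
    have nz: "?R \<alpha> \<noteq> 0" by (rule rowD_diag)
    show "?d \<alpha> \<gamma> = (1 / ?R \<alpha>) * (?R \<gamma> + (-1) * (\<Sum>\<eta>\<in>A2 m n - {\<alpha>}. ?R \<eta> * ?d \<eta> \<gamma>))"
    proof (cases "\<gamma> = \<alpha>")
      case True
      then show ?thesis unfolding s s2 using nz by simp
    next
      case False
      then show ?thesis unfolding s s2 using g by simp
    qed
  qed
qed


definition Mset :: "nat \<Rightarrow> nat \<Rightarrow> (nat \<Rightarrow> nat) set" where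
  "Mset m k = {\<gamma>. (\<forall>i\<ge>m. \<gamma> i = 0) \<and> mdeg m \<gamma> = k}"

lemma finite_Mset: "finite (Mset m k)"
  using finite_mi[of m k] by (rule finite_subset[rotated]) (auto simp: Mset_def mi_iff)

lemma mdeg_upd: "mdeg (Suc m) (\<gamma>(m := a)) = mdeg m \<gamma> + a"
  unfolding mdeg_def by (simp add: lessThan_Suc)

lemma mdeg_Suc: "mdeg (Suc m) \<gamma> = mdeg m \<gamma> + \<gamma> m"
  unfolding mdeg_def by simp

lemma mdeg_upd0: "mdeg m (\<gamma>(m := 0)) = mdeg m \<gamma>"
  unfolding mdeg_def by (intro sum.cong) auto

lemma Mset_0: "Mset 0 k = (if k = 0 then {\<lambda>_. 0} else {})"
  by (auto simp: Mset_def mdeg_def)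

lemma multinom:
  "\<exists>mc. \<forall>k. (\<forall>\<gamma>\<in>Mset m k. mc k \<gamma> > (0::real)) \<and>
      (\<forall>x::nat\<Rightarrow>real. (\<Sum>i<m. x i) ^ k = (\<Sum>\<gamma>\<in>Mset m k. mc k \<gamma> * (\<Prod>i<m. x i ^ \<gamma> i)))"
proof (induction m)
  case 0
  show ?case by (intro exI[of _ "\<lambda>_ _. 1"]) (simp add: Mset_0)
next
  case (Suc m)
  then obtain mc where mc: "\<And>k \<gamma>. \<gamma> \<in> Mset m k \<Longrightarrow> mc k \<gamma> > (0::real)"
    "\<And>k x. (\<Sum>i<m. x i) ^ k = (\<Sum>\<gamma>\<in>Mset m k. mc k \<gamma> * (\<Prod>i<m. x i ^ \<gamma> i))" by blast
  define mc' where "mc' k \<gamma> = real (k choose \<gamma> m) * mc (k - \<gamma> m) (\<gamma>(m := 0))" for k \<gamma>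
  have pos: "mc' k \<gamma> > 0" if "\<gamma> \<in> Mset (Suc m) k" for k \<gamma>
  proof -
    have gm: "\<gamma> m \<le> k" using that by (auto simp: Mset_def mdeg_Suc)
    have "\<gamma>(m := 0) \<in> Mset m (k - \<gamma> m)" using that by (auto simp: Mset_def mdeg_Suc mdeg_upd0)
    then show ?thesis unfolding mc'_def using mc(1) gm by (simp add: zero_less_mult_iff)
  qed
  have eq: "(\<Sum>i<Suc m. x i) ^ k = (\<Sum>\<gamma>\<in>Mset (Suc m) k. mc' k \<gamma> * (\<Prod>i<Suc m. x i ^ \<gamma> i))" for k x
  proof -
    let ?S = "\<lambda>j. Mset m (k - j)"
    have "(\<Sum>i<Suc m. x i) ^ k = (x m + (\<Sum>i<m. x i)) ^ k" by (simp add: add.commute)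
    also have "\<dots> = (\<Sum>j\<le>k. real (k choose j) * x m ^ j * (\<Sum>i<m. x i) ^ (k - j))"
      by (rule binomial_ring)
    also have "\<dots> = (\<Sum>j\<le>k. \<Sum>\<gamma>'\<in>?S j. real (k choose j) * mc (k - j) \<gamma>' * (x m ^ j * (\<Prod>i<m. x i ^ \<gamma>' i)))"
      by (intro sum.cong refl) (simp add: mc(2) sum_distrib_left mult_ac)
    also have "\<dots> = (\<Sum>(j, \<gamma>')\<in>(SIGMA j:{..k}. ?S j). real (k choose j) * mc (k - j) \<gamma>' * (x m ^ j * (\<Prod>i<m. x i ^ \<gamma>' i)))"
      by (rule sum.Sigma) (auto simp: finite_Mset)
    also have "\<dots> = (\<Sum>\<gamma>\<in>Mset (Suc m) k. mc' k \<gamma> * (\<Prod>i<Suc m. x i ^ \<gamma> i))"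
    proof -
      let ?Sg = "SIGMA j:{..k}. ?S j"
      define I where "I = (\<lambda>\<gamma>::nat\<Rightarrow>nat. (\<gamma> m, \<gamma>(m := 0)))"
      define J where "J = (\<lambda>(a, \<gamma>'::nat\<Rightarrow>nat). \<gamma>'(m := a))"
      have w1: "I (J p) = p" and w2: "J p \<in> Mset (Suc m) k"
        and w5: "mc' k (J p) * (\<Prod>i<Suc m. x i ^ J p i) = (case p of (j, \<gamma>') \<Rightarrow> real (k choose j) * mc (k - j) \<gamma>' * (x m ^ j * (\<Prod>i<m. x i ^ \<gamma>' i)))"
        if p: "p \<in> ?Sg" for p
      proof -
        obtain a \<gamma>' where pa: "p = (a, \<gamma>')" by (cases p)
        have a: "a \<le> k" and g: "\<forall>i\<ge>m. \<gamma>' i = 0" "mdeg m \<gamma>' = k - a" using p pa by (auto simp: Mset_def)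
        have gm: "\<gamma>' m = 0" using g by simp
        show "I (J p) = p" using pa gm by (auto simp: I_def J_def fun_upd_idem)
        show "J p \<in> Mset (Suc m) k" using pa g a by (auto simp: J_def Mset_def mdeg_upd)
        show "mc' k (J p) * (\<Prod>i<Suc m. x i ^ J p i) = (case p of (j, \<gamma>') \<Rightarrow> real (k choose j) * mc (k - j) \<gamma>' * (x m ^ j * (\<Prod>i<m. x i ^ \<gamma>' i)))"
          using pa gm by (simp add: J_def mc'_def fun_upd_idem mult_ac)
      qed
      have w3: "J (I \<gamma>) = \<gamma>" and w4: "I \<gamma> \<in> ?Sg" if g: "\<gamma> \<in> Mset (Suc m) k" for \<gamma>
      proof -
        show "J (I \<gamma>) = \<gamma>" by (simp add: I_def J_def)
        show "I \<gamma> \<in> ?Sg" using g by (auto simp: I_def Mset_def mdeg_Suc mdeg_upd0)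
      qed
      show ?thesis
        by (rule sum.reindex_bij_witness[of ?Sg I J "Mset (Suc m) k" "\<lambda>\<gamma>. mc' k \<gamma> * (\<Prod>i<Suc m. x i ^ \<gamma> i)"
              "\<lambda>p. case p of (j, \<gamma>') \<Rightarrow> real (k choose j) * mc (k - j) \<gamma>' * (x m ^ j * (\<Prod>i<m. x i ^ \<gamma>' i))",
              OF w1 w2 w3 w4 w5])
    qed
    finally show ?thesis .
  qed
  show ?case using pos eq by (intro exI[of _ mc']) blast
qed


lemma core:
  assumes "\<alpha> \<in> A2 m n"
  shows "\<exists>\<mu>. \<forall>k \<xi>. 2 \<le> k \<longrightarrow> k \<le> n \<longrightarrow>
     (\<Sum>\<beta>\<in>A2 m n. \<mu> \<beta> * (\<Sum>i<m. real (\<beta> i) * \<xi> i) ^ k) = (if k = mdeg m \<alpha> then (\<Prod>i<m. \<xi> i ^ \<alpha> i) else 0)"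
proof -
  obtain w where w: "\<forall>\<gamma>\<in>A2 m n. (if \<gamma> = \<alpha> then 1 else 0) = (\<Sum>\<beta>\<in>A2 m n. w \<beta> * tst m \<gamma> \<beta>)"
    using repr_delta[OF assms] unfolding grepr_def by blast
  obtain MC where MC: "\<And>k \<gamma>. \<gamma> \<in> Mset m k \<Longrightarrow> MC k \<gamma> > (0::real)"
    "\<And>k x. (\<Sum>i<m. x i) ^ k = (\<Sum>\<gamma>\<in>Mset m k. MC k \<gamma> * (\<Prod>i<m. x i ^ \<gamma> i))"
    using multinom[of m] by blast
  define c where "c = MC (mdeg m \<alpha>) \<alpha>"
  have aM: "\<alpha> \<in> Mset m (mdeg m \<alpha>)" using assms by (auto simp: Mset_def A2_iff)
  then have c: "c > 0" unfolding c_def by (rule MC(1))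
  show ?thesis
  proof (intro exI[of _ "\<lambda>\<beta>. w \<beta> / c"] allI impI)
    fix k :: nat and \<xi> :: "nat \<Rightarrow> real" assume k: "2 \<le> k" "k \<le> n"
    let ?mon = "\<lambda>\<gamma>. \<Prod>i<m. \<xi> i ^ \<gamma> i"
    have MsA2: "Mset m k \<subseteq> A2 m n" using k by (auto simp: Mset_def A2_iff)
    have "(\<Sum>\<beta>\<in>A2 m n. w \<beta> / c * (\<Sum>i<m. real (\<beta> i) * \<xi> i) ^ k)
        = (\<Sum>\<beta>\<in>A2 m n. w \<beta> / c * (\<Sum>\<gamma>\<in>Mset m k. MC k \<gamma> * (tst m \<gamma> \<beta> * ?mon \<gamma>)))"
      by (intro sum.cong refl) (simp add: MC(2) tst_def power_mult_distrib prod.distrib)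
    also have "\<dots> = (\<Sum>\<beta>\<in>A2 m n. \<Sum>\<gamma>\<in>Mset m k. MC k \<gamma> * ?mon \<gamma> / c * (w \<beta> * tst m \<gamma> \<beta>))"
      by (intro sum.cong refl) (simp add: sum_distrib_left mult_ac)
    also have "\<dots> = (\<Sum>\<gamma>\<in>Mset m k. \<Sum>\<beta>\<in>A2 m n. MC k \<gamma> * ?mon \<gamma> / c * (w \<beta> * tst m \<gamma> \<beta>))"
      by (rule sum.swap)
    also have "\<dots> = (\<Sum>\<gamma>\<in>Mset m k. MC k \<gamma> * ?mon \<gamma> / c * (\<Sum>\<beta>\<in>A2 m n. w \<beta> * tst m \<gamma> \<beta>))"
      by (simp add: sum_distrib_left)
    also have "\<dots> = (\<Sum>\<gamma>\<in>Mset m k. MC k \<gamma> * ?mon \<gamma> / c * (if \<gamma> = \<alpha> then 1 else 0))"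
    proof (intro sum.cong refl)
      fix \<gamma> assume "\<gamma> \<in> Mset m k"
      then have "\<gamma> \<in> A2 m n" using MsA2 by blast
      then have "(\<Sum>\<beta>\<in>A2 m n. w \<beta> * tst m \<gamma> \<beta>) = (if \<gamma> = \<alpha> then 1 else 0)" using w by metis
      then show "MC k \<gamma> * ?mon \<gamma> / c * (\<Sum>\<beta>\<in>A2 m n. w \<beta> * tst m \<gamma> \<beta>) = MC k \<gamma> * ?mon \<gamma> / c * (if \<gamma> = \<alpha> then 1 else 0)"
        by (simp only:)
    qed
    also have "\<dots> = (\<Sum>\<gamma>\<in>Mset m k. if \<alpha> = \<gamma> then MC k \<gamma> * ?mon \<gamma> / c else 0)"
      by (intro sum.cong refl) auto
    also have "\<dots> = (if \<alpha> \<in> Mset m k then MC k \<alpha> * ?mon \<alpha> / c else 0)"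
      by (rule sum.delta'[OF finite_Mset])
    also have "\<dots> = (if k = mdeg m \<alpha> then ?mon \<alpha> else 0)"
      using c aM by (auto simp: Mset_def c_def)
    finally show "(\<Sum>\<beta>\<in>A2 m n. w \<beta> / c * (\<Sum>i<m. real (\<beta> i) * \<xi> i) ^ k) = (if k = mdeg m \<alpha> then ?mon \<alpha> else 0)" .
  qed
qed

lemma card_mi: "card (multi_indices m n) = (n + m) choose m"
proof (induction m arbitrary: n)
  case 0
  have "multi_indices 0 n = {\<lambda>_. 0}" by (auto simp: mi_iff mdeg_def)
  then show ?case by simp
next
  case (Suc m)
  let ?Sg = "SIGMA j:{..n}. multi_indices m (n - j)"
  define I where "I = (\<lambda>\<gamma>::nat\<Rightarrow>nat. (\<gamma> m, \<gamma>(m := 0)))"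
  define J where "J = (\<lambda>(a, \<gamma>'::nat\<Rightarrow>nat). \<gamma>'(m := a))"
  have w1: "I (J p) = p" and w2: "J p \<in> multi_indices (Suc m) n" if p: "p \<in> ?Sg" for p
  proof -
    obtain a \<gamma>' where pa: "p = (a, \<gamma>')" by (cases p)
    have a: "a \<le> n" and g: "\<forall>i\<ge>m. \<gamma>' i = 0" "mdeg m \<gamma>' \<le> n - a" using p pa by (auto simp: mi_iff)
    have gm: "\<gamma>' m = 0" using g by simp
    show "I (J p) = p" using pa gm by (auto simp: I_def J_def fun_upd_idem)
    show "J p \<in> multi_indices (Suc m) n" using pa g a by (auto simp: J_def mi_iff mdeg_upd)
  qed
  have w3: "J (I \<gamma>) = \<gamma>" and w4: "I \<gamma> \<in> ?Sg" if g: "\<gamma> \<in> multi_indices (Suc m) n" for \<gamma>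
  proof -
    show "J (I \<gamma>) = \<gamma>" by (simp add: I_def J_def)
    show "I \<gamma> \<in> ?Sg" using g by (auto simp: I_def mi_iff mdeg_Suc mdeg_upd0)
  qed
  have "card ?Sg = card (multi_indices (Suc m) n)"
    unfolding card_eq_sum
    by (rule sum.reindex_bij_witness[of ?Sg I J "multi_indices (Suc m) n" "\<lambda>_. 1" "\<lambda>_. 1", OF w1 w2 w3 w4]) auto
  moreover have "card ?Sg = (\<Sum>j\<le>n. (n - j + m) choose m)"
    using Suc.IH by (simp add: finite_mi)
  moreover have "(\<Sum>j\<le>n. (n - j + m) choose m) = (\<Sum>t\<le>n. (m + t) choose t)"
  proof -
    have "(\<Sum>j\<le>n. (n - j + m) choose m) = (\<Sum>j\<in>{0..n}. (n + 0 - j + m) choose m)"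
      by (simp add: atMost_atLeast0)
    also have "\<dots> = (\<Sum>j\<in>{0..n}. (n + 0 - (n + 0 - j) + m) choose m)"
      by (rule sum.atLeastAtMost_rev)
    also have "\<dots> = (\<Sum>t\<le>n. (m + t) choose t)"
    proof -
      have "(t + m) choose m = (m + t) choose t" for t
      proof -
        have "(t + m) choose m = (t + m) choose ((t + m) - m)" by (rule binomial_symmetric) simp
        then show ?thesis by (simp add: add.commute)
      qed
      then show ?thesis by (simp add: atMost_atLeast0)
    qed
    finally show ?thesis .
  qed
  moreover have "(\<Sum>t\<le>n. (m + t) choose t) = (n + Suc m) choose Suc m"
  proof -
    have "(\<Sum>t\<le>n. (m + t) choose t) = Suc (m + n) choose n" by (rule sum_choose_lower)
    also have "\<dots> = Suc (m + n) choose (Suc (m + n) - n)" by (rule binomial_symmetric) simp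
    also have "Suc (m + n) - n = Suc m" by simp
    also have "Suc (m + n) = n + Suc m" by simp
    finally show ?thesis .
  qed
  ultimately show ?case by simp
qed

lemma card_A2:
  assumes "1 \<le> n"
  shows "card (A2 m n) + 1 + m \<le> (n + m) choose m"
proof -
  define E where "E = (\<lambda>i. \<lambda>l. if l = i then (1::nat) else 0) ` {..<m}"
  have mdE: "mdeg m (\<lambda>l. if l = i then (1::nat) else 0) = 1" if "i < m" for i
    using mdeg_axis[of i m "\<lambda>l. if l = i then (1::nat) else 0"] that by simp
  have injE: "inj_on (\<lambda>i. \<lambda>l. if l = i then (1::nat) else 0) {..<m}"
  proof (rule inj_onI)
    fix i j assume h: "(\<lambda>l. if l = i then (1::nat) else 0) = (\<lambda>l. if l = j then 1 else 0)"
    have "(if i = i then (1::nat) else 0) = (if i = j then 1 else 0)" using fun_cong[OF h, of i] by simp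
    then show "i = j" by (cases "i = j") auto
  qed
  have cE: "card E = m" unfolding E_def using injE by (simp add: card_image)
  have d1: "A2 m n \<inter> {\<lambda>_. 0} = {}" by (auto simp: A2_iff mdeg_def)
  have d2: "(A2 m n \<union> {\<lambda>_. 0}) \<inter> E = {}"
  proof -
    have "x \<notin> A2 m n" if "x \<in> E" for x using that mdE by (auto simp: E_def A2_iff)
    moreover have "(\<lambda>_. 0) \<notin> E"
    proof
      assume "(\<lambda>_. 0) \<in> E"
      then obtain i :: nat where h: "(\<lambda>_. 0) = (\<lambda>l. if l = i then (1::nat) else 0)" by (auto simp: E_def)
      show False using fun_cong[OF h, of i] by simp
    qed
    ultimately show ?thesis by blast
  qed
  have fE: "finite E" unfolding E_def by simp
  have "card (A2 m n \<union> {\<lambda>_. 0} \<union> E) = card (A2 m n) + 1 + m"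
    using d1 d2 cE fE finite_A2[of m n] by (simp add: card_Un_disjoint)
  moreover have "A2 m n \<union> {\<lambda>_. 0} \<union> E \<subseteq> multi_indices m n"
    using assms mdE by (auto simp: A2_def E_def mi_iff mdeg_def)
  then have "card (A2 m n \<union> {\<lambda>_. 0} \<union> E) \<le> card (multi_indices m n)"
    by (intro card_mono finite_mi)
  ultimately show ?thesis by (simp add: card_mi)
qed


lemma atMost_split01: "1 \<le> (n::nat) \<Longrightarrow> (\<Sum>l\<le>n. f l) = f 0 + f 1 + (\<Sum>l\<in>{2..n}. (f l :: real))"
proof -
  assume n: "1 \<le> n"
  have "{..n} = insert 0 (insert 1 {2..n})" using n by auto
  then show ?thesis by (simp add: add.assoc)
qed

lemma shallow_ident:
  fixes cf :: "(nat \<Rightarrow> nat) \<Rightarrow> real" and D :: "nat \<Rightarrow> real"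
  assumes n1: "1 \<le> n" and Dnz: "\<And>j. 2 \<le> j \<Longrightarrow> j \<le> n \<Longrightarrow> D j \<noteq> 0" and h: "h \<noteq> 0"
    and \<mu>: "\<And>\<alpha> k \<xi>. \<alpha> \<in> A2 m n \<Longrightarrow> 2 \<le> k \<Longrightarrow> k \<le> n \<Longrightarrow>
       (\<Sum>\<beta>\<in>A2 m n. \<mu> \<alpha> \<beta> * (\<Sum>t<m. real (\<beta> t) * \<xi> t) ^ k) = (if k = mdeg m \<alpha> then (\<Prod>i<m. \<xi> i ^ \<alpha> i) else 0)"
  defines "lam \<equiv> \<lambda>\<beta>. (\<Sum>\<alpha>\<in>A2 m n. cf \<alpha> * fact (mdeg m \<alpha>) / (D (mdeg m \<alpha>) * h ^ mdeg m \<alpha>) * \<mu> \<alpha> \<beta>)"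
  shows "(\<Sum>\<beta>\<in>A2 m n. lam \<beta> * (\<Sum>l\<le>n. D l / fact l * (h * (\<Sum>t<m. real (\<beta> t) * u t)) ^ l))
       = D 0 * (\<Sum>\<beta>\<in>A2 m n. lam \<beta>) + (\<Sum>t<m. (D 1 * h * (\<Sum>\<beta>\<in>A2 m n. lam \<beta> * real (\<beta> t))) * u t)
         + (\<Sum>\<alpha>\<in>A2 m n. cf \<alpha> * (\<Prod>i<m. u i ^ \<alpha> i))"
proof -
  let ?NA = "A2 m n"
  let ?dot = "\<lambda>\<beta>. (\<Sum>t<m. real (\<beta> t) * u t)"
  let ?mon = "\<lambda>\<alpha>. (\<Prod>i<m. u i ^ \<alpha> i)"
  let ?S = "\<lambda>l. (\<Sum>\<beta>\<in>?NA. lam \<beta> * ?dot \<beta> ^ l)"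
  have "(\<Sum>\<beta>\<in>?NA. lam \<beta> * (\<Sum>l\<le>n. D l / fact l * (h * ?dot \<beta>) ^ l))
      = (\<Sum>\<beta>\<in>?NA. \<Sum>l\<le>n. D l / fact l * h ^ l * (lam \<beta> * ?dot \<beta> ^ l))"
  proof (intro sum.cong refl)
    fix \<beta>
    have "lam \<beta> * (\<Sum>l\<le>n. D l / fact l * (h * ?dot \<beta>) ^ l) = (\<Sum>l\<le>n. lam \<beta> * (D l / fact l * (h * ?dot \<beta>) ^ l))"
      by (rule sum_distrib_left)
    also have "\<dots> = (\<Sum>l\<le>n. D l / fact l * h ^ l * (lam \<beta> * ?dot \<beta> ^ l))"
      by (intro sum.cong refl) (simp only: power_mult_distrib mult_ac)
    finally show "lam \<beta> * (\<Sum>l\<le>n. D l / fact l * (h * ?dot \<beta>) ^ l) = (\<Sum>l\<le>n. D l / fact l * h ^ l * (lam \<beta> * ?dot \<beta> ^ l))" .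
  qed
  also have "\<dots> = (\<Sum>l\<le>n. \<Sum>\<beta>\<in>?NA. D l / fact l * h ^ l * (lam \<beta> * ?dot \<beta> ^ l))"
    by (rule sum.swap)
  also have "\<dots> = (\<Sum>l\<le>n. D l / fact l * h ^ l * ?S l)"
    by (simp add: sum_distrib_left)
  also have "\<dots> = D 0 * ?S 0 + D 1 * h * ?S 1 + (\<Sum>l\<in>{2..n}. D l / fact l * h ^ l * ?S l)"
    using atMost_split01[OF n1] by simp
  also have "?S 0 = (\<Sum>\<beta>\<in>?NA. lam \<beta>)" by simp
  also have "D 1 * h * ?S 1 = (\<Sum>t<m. (D 1 * h * (\<Sum>\<beta>\<in>?NA. lam \<beta> * real (\<beta> t))) * u t)"
  proof -
    have "?S 1 = (\<Sum>\<beta>\<in>?NA. \<Sum>t<m. lam \<beta> * real (\<beta> t) * u t)"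
      by (simp add: sum_distrib_left mult_ac)
    also have "\<dots> = (\<Sum>t<m. \<Sum>\<beta>\<in>?NA. lam \<beta> * real (\<beta> t) * u t)" by (rule sum.swap)
    finally show ?thesis by (simp add: sum_distrib_left sum_distrib_right mult_ac)
  qed
  also have "(\<Sum>l\<in>{2..n}. D l / fact l * h ^ l * ?S l) = (\<Sum>\<alpha>\<in>?NA. cf \<alpha> * ?mon \<alpha>)"
  proof -
    have "D l / fact l * h ^ l * ?S l = (\<Sum>\<alpha>\<in>?NA. if l = mdeg m \<alpha> then cf \<alpha> * ?mon \<alpha> else 0)"
      if l: "l \<in> {2..n}" for l
    proof -
      have "?S l = (\<Sum>\<beta>\<in>?NA. \<Sum>\<alpha>\<in>?NA. cf \<alpha> * fact (mdeg m \<alpha>) / (D (mdeg m \<alpha>) * h ^ mdeg m \<alpha>) * (\<mu> \<alpha> \<beta> * ?dot \<beta> ^ l))"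
        unfolding lam_def by (intro sum.cong refl) (simp only: sum_distrib_right mult.assoc)
      also have "\<dots> = (\<Sum>\<alpha>\<in>?NA. \<Sum>\<beta>\<in>?NA. cf \<alpha> * fact (mdeg m \<alpha>) / (D (mdeg m \<alpha>) * h ^ mdeg m \<alpha>) * (\<mu> \<alpha> \<beta> * ?dot \<beta> ^ l))"
        by (rule sum.swap)
      also have "\<dots> = (\<Sum>\<alpha>\<in>?NA. cf \<alpha> * fact (mdeg m \<alpha>) / (D (mdeg m \<alpha>) * h ^ mdeg m \<alpha>) * (if l = mdeg m \<alpha> then ?mon \<alpha> else 0))"
      proof (intro sum.cong refl)
        fix \<alpha> assume a: "\<alpha> \<in> ?NA"
        have "(\<Sum>\<beta>\<in>?NA. \<mu> \<alpha> \<beta> * ?dot \<beta> ^ l) = (if l = mdeg m \<alpha> then ?mon \<alpha> else 0)"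
          using \<mu>[OF a, of l u] l by simp
        then show "(\<Sum>\<beta>\<in>?NA. cf \<alpha> * fact (mdeg m \<alpha>) / (D (mdeg m \<alpha>) * h ^ mdeg m \<alpha>) * (\<mu> \<alpha> \<beta> * ?dot \<beta> ^ l))
            = cf \<alpha> * fact (mdeg m \<alpha>) / (D (mdeg m \<alpha>) * h ^ mdeg m \<alpha>) * (if l = mdeg m \<alpha> then ?mon \<alpha> else 0)"
          by (simp only: sum_distrib_left[symmetric])
      qed
      finally have S: "?S l = \<dots>" .
      have "D l / fact l * h ^ l * ?S l = (\<Sum>\<alpha>\<in>?NA. D l / fact l * h ^ l * (cf \<alpha> * fact (mdeg m \<alpha>) / (D (mdeg m \<alpha>) * h ^ mdeg m \<alpha>) * (if l = mdeg m \<alpha> then ?mon \<alpha> else 0)))"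
        unfolding S by (simp add: sum_distrib_left)
      also have "\<dots> = (\<Sum>\<alpha>\<in>?NA. if l = mdeg m \<alpha> then cf \<alpha> * ?mon \<alpha> else 0)"
      proof (intro sum.cong refl)
        fix \<alpha> assume a: "\<alpha> \<in> ?NA"
        show "D l / fact l * h ^ l * (cf \<alpha> * fact (mdeg m \<alpha>) / (D (mdeg m \<alpha>) * h ^ mdeg m \<alpha>) * (if l = mdeg m \<alpha> then ?mon \<alpha> else 0))
            = (if l = mdeg m \<alpha> then cf \<alpha> * ?mon \<alpha> else 0)"
        proof (cases "l = mdeg m \<alpha>")
          case True
          have "D l \<noteq> 0" using Dnz l by auto
          moreover have "h ^ l \<noteq> 0" using h by simp
          moreover have "fact l \<noteq> (0::real)" by simp
          ultimately show ?thesis using True h by (simp add: field_simps)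
        qed simp
      qed
      finally show ?thesis .
    qed
    then have "(\<Sum>l\<in>{2..n}. D l / fact l * h ^ l * ?S l) = (\<Sum>l\<in>{2..n}. \<Sum>\<alpha>\<in>?NA. if l = mdeg m \<alpha> then cf \<alpha> * ?mon \<alpha> else 0)"
      by (rule sum.cong[OF refl])
    also have "\<dots> = (\<Sum>\<alpha>\<in>?NA. \<Sum>l\<in>{2..n}. if l = mdeg m \<alpha> then cf \<alpha> * ?mon \<alpha> else 0)"
      by (rule sum.swap)
    also have "\<dots> = (\<Sum>\<alpha>\<in>?NA. cf \<alpha> * ?mon \<alpha>)"
    proof (intro sum.cong refl)
      fix \<alpha> assume "\<alpha> \<in> ?NA"
      then have "mdeg m \<alpha> \<in> {2..n}" by (auto simp: A2_iff)
      then show "(\<Sum>l\<in>{2..n}. if l = mdeg m \<alpha> then cf \<alpha> * ?mon \<alpha> else 0) = cf \<alpha> * ?mon \<alpha>"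
        by (simp add: sum.delta)
    qed
    finally show ?thesis .
  qed
  finally show ?thesis by simp
qed

lemma mon_unit: "i < (m::nat) \<Longrightarrow> (\<Prod>l<m. u l ^ (if l = i then 1 else 0)) = (u i :: real)"
proof -
  assume i: "i < m"
  have "(\<Prod>l<m. u l ^ (if l = i then 1 else 0)) = (\<Prod>l<m. if l = i then u l else 1)"
    by (intro prod.cong refl) simp
  also have "\<dots> = (if i = i then u i else 1) * (\<Prod>l\<in>{..<m} - {i}. if l = i then u l else 1)"
    using i by (subst prod.remove[of _ i]) auto
  also have "(\<Prod>l\<in>{..<m} - {i}. if l = i then u l else 1) = 1" by (intro prod.neutral) auto
  finally show ?thesis by simp
qed

lemma poly_split:
  fixes cf :: "(nat \<Rightarrow> nat) \<Rightarrow> real"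
  assumes n1: "1 \<le> n"
  shows "(\<Sum>\<alpha>\<in>multi_indices m n. cf \<alpha> * (\<Prod>i<m. u i ^ \<alpha> i))
     = cf (\<lambda>_. 0) + (\<Sum>t<m. cf (\<lambda>l. if l = t then 1 else 0) * u t) + (\<Sum>\<alpha>\<in>A2 m n. cf \<alpha> * (\<Prod>i<m. u i ^ \<alpha> i))"
proof -
  let ?e = "\<lambda>t::nat. \<lambda>l::nat. if l = t then (1::nat) else 0"
  let ?E = "?e ` {..<m}"
  let ?f = "\<lambda>\<alpha>. cf \<alpha> * (\<Prod>i<m. u i ^ \<alpha> i)"
  have mdE: "mdeg m (?e i) = 1" if "i < m" for i
    using mdeg_axis[of i m "?e i"] that by simp
  have injE: "inj_on ?e {..<m}"
  proof (rule inj_onI)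
    fix i j assume h: "?e i = ?e j"
    have "(if i = i then (1::nat) else 0) = (if i = j then 1 else 0)" using fun_cong[OF h, of i] by simp
    then show "i = j" by (cases "i = j") auto
  qed
  have split: "multi_indices m n = insert (\<lambda>_. 0) (?E \<union> A2 m n)"
  proof (intro set_eqI iffI)
    fix \<alpha> assume a: "\<alpha> \<in> multi_indices m n"
    have supp: "\<And>i. m \<le> i \<Longrightarrow> \<alpha> i = 0" using a by (auto simp: mi_iff)
    consider "mdeg m \<alpha> = 0" | "mdeg m \<alpha> = 1" | "2 \<le> mdeg m \<alpha>" by linarith
    then show "\<alpha> \<in> insert (\<lambda>_. 0) (?E \<union> A2 m n)"
    proof cases
      case 1
      then have lo: "\<forall>i<m. \<alpha> i = 0" by (simp add: mdeg_def)
      have "\<alpha> = (\<lambda>_. 0)"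
      proof (rule ext)
        fix i show "\<alpha> i = 0" using lo supp[of i] by (cases "i < m") auto
      qed
      then show ?thesis by simp
    next
      case 2
      then obtain i where i: "i < m" "\<alpha> i \<noteq> 0" using nonzero_coord[of m \<alpha>] by auto
      have "mdeg m \<alpha> = \<alpha> i + (\<Sum>l\<in>{..<m} - {i}. \<alpha> l)"
        unfolding mdeg_def using i by (subst sum.remove[of _ i]) auto
      then have e: "\<alpha> i + (\<Sum>l\<in>{..<m} - {i}. \<alpha> l) = 1" using 2 by simp
      have bi: "\<alpha> i = 1" using e i(2) by linarith
      have "(\<Sum>l\<in>{..<m} - {i}. \<alpha> l) = 0" using e bi by linarith
      then have rest: "\<forall>l\<in>{..<m} - {i}. \<alpha> l = 0" by simp
      have "\<alpha> = ?e i"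
      proof
        fix l show "\<alpha> l = ?e i l"
        proof (cases "l = i")
          case True then show ?thesis using bi by simp
        next
          case False then show ?thesis using rest supp[of l] by (cases "l < m") auto
        qed
      qed
      then show ?thesis using i by auto
    next
      case 3 then show ?thesis using a by (auto simp: A2_def)
    qed
  next
    fix \<alpha> assume "\<alpha> \<in> insert (\<lambda>_. 0) (?E \<union> A2 m n)"
    then show "\<alpha> \<in> multi_indices m n" using n1 mdE by (auto simp: A2_def mi_iff mdeg_def)
  qed
  have d1: "(\<lambda>_. 0) \<notin> ?E \<union> A2 m n"
  proof
    assume "(\<lambda>_. 0) \<in> ?E \<union> A2 m n"
    then show False
    proof
      assume "(\<lambda>_. 0) \<in> ?E"
      then obtain i :: nat where h: "(\<lambda>_. 0) = ?e i" by auto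
      show False using fun_cong[OF h, of i] by simp
    next
      assume "(\<lambda>_. 0) \<in> A2 m n"
      then show False by (auto simp: A2_iff mdeg_def)
    qed
  qed
  have d2: "?E \<inter> A2 m n = {}" using mdE by (auto simp: A2_iff)
  have "(\<Sum>\<alpha>\<in>multi_indices m n. ?f \<alpha>) = ?f (\<lambda>_. 0) + (\<Sum>\<alpha>\<in>?E. ?f \<alpha>) + (\<Sum>\<alpha>\<in>A2 m n. ?f \<alpha>)"
    unfolding split using d1 d2 finite_A2[of m n] by (simp add: sum.union_disjoint add.assoc)
  also have "(\<Sum>\<alpha>\<in>?E. ?f \<alpha>) = (\<Sum>t<m. ?f (?e t))"
    by (rule sum.reindex[OF injE, unfolded comp_def])
  also have "\<dots> = (\<Sum>t<m. cf (?e t) * u t)"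
    by (intro sum.cong refl) (simp add: mon_unit)
  finally show ?thesis by simp
qed


lemma dot_bound:
  assumes "\<beta> \<in> A2 m n" "\<forall>t<m. \<bar>u t\<bar> \<le> R" "R \<ge> 0"
  shows "\<bar>\<Sum>t<m. real (\<beta> t) * u t\<bar> \<le> real n * R"
proof -
  have "\<bar>\<Sum>t<m. real (\<beta> t) * u t\<bar> \<le> (\<Sum>t<m. \<bar>real (\<beta> t) * u t\<bar>)" by (rule sum_abs)
  also have "\<dots> \<le> (\<Sum>t<m. real (\<beta> t) * R)"
    using assms(2) by (intro sum_mono) (simp add: abs_mult mult_left_mono)
  also have "\<dots> = real (mdeg m \<beta>) * R" by (simp add: mdeg_def sum_distrib_right)
  also have "\<dots> \<le> real n * R"
    using assms(1,3) by (intro mult_right_mono) (auto simp: A2_iff)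
  finally show ?thesis .
qed

lemma lin_bound:
  fixes u v :: "nat \<Rightarrow> real"
  assumes "\<forall>t<m. \<bar>u t\<bar> \<le> R" "R \<ge> 0"
  shows "\<bar>\<Sum>t<m. v t * u t\<bar> \<le> (\<Sum>t<m. \<bar>v t\<bar>) * R"
proof -
  have "\<bar>\<Sum>t<m. v t * u t\<bar> \<le> (\<Sum>t<m. \<bar>v t * u t\<bar>)" by (rule sum_abs)
  also have "\<dots> \<le> (\<Sum>t<m. \<bar>v t\<bar> * R)"
    using assms(1) by (intro sum_mono) (simp add: abs_mult mult_left_mono)
  also have "\<dots> = (\<Sum>t<m. \<bar>v t\<bar>) * R" by (simp add: sum_distrib_right)
  finally show ?thesis .
qed

lemma shallow:
  fixes cf :: "(nat \<Rightarrow> nat) \<Rightarrow> real" and \<psi> :: "real \<Rightarrow> real"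
  assumes Cn: "C_n n \<psi>" and bD: "\<And>j. 1 \<le> j \<Longrightarrow> j \<le> n \<Longrightarrow> (deriv ^^ j) \<psi> b \<noteq> 0"
    and n1: "1 \<le> n" and R: "R > 0" and e: "\<epsilon> > 0"
  shows "\<exists>a bb w c0. \<forall>u. (\<forall>t<m. \<bar>u t\<bar> \<le> R) \<longrightarrow>
     \<bar>c0 + (\<Sum>j<card (A2 m n) + 1. a j * \<psi> (bb j + (\<Sum>t<m. w j t * u t)))
        - (\<Sum>\<alpha>\<in>multi_indices m n. cf \<alpha> * (\<Prod>i<m. u i ^ \<alpha> i))\<bar> < \<epsilon>"
proof -
  let ?NA = "A2 m n"
  define D where "D l = (deriv ^^ l) \<psi> b" for l
  have D0: "D 0 = \<psi> b" by (simp add: D_def)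
  have D1: "D 1 \<noteq> 0" using bD[of 1] n1 by (simp add: D_def)
  have "\<forall>\<alpha>\<in>?NA. \<exists>\<mu>. \<forall>k \<xi>. 2 \<le> k \<longrightarrow> k \<le> n \<longrightarrow>
     (\<Sum>\<beta>\<in>A2 m n. \<mu> \<beta> * (\<Sum>i<m. real (\<beta> i) * \<xi> i) ^ k) = (if k = mdeg m \<alpha> then (\<Prod>i<m. \<xi> i ^ \<alpha> i) else 0)"
    using core by blast
  then have "\<exists>M. \<forall>\<alpha>\<in>?NA. \<forall>k \<xi>. 2 \<le> k \<longrightarrow> k \<le> n \<longrightarrow>
     (\<Sum>\<beta>\<in>A2 m n. M \<alpha> \<beta> * (\<Sum>i<m. real (\<beta> i) * \<xi> i) ^ k) = (if k = mdeg m \<alpha> then (\<Prod>i<m. \<xi> i ^ \<alpha> i) else 0)"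
    by (rule bchoice)
  then obtain M where M0: "\<forall>\<alpha>\<in>?NA. \<forall>k \<xi>. 2 \<le> k \<longrightarrow> k \<le> n \<longrightarrow>
     (\<Sum>\<beta>\<in>A2 m n. M \<alpha> \<beta> * (\<Sum>i<m. real (\<beta> i) * \<xi> i) ^ k) = (if k = mdeg m \<alpha> then (\<Prod>i<m. \<xi> i ^ \<alpha> i) else 0)"
    by (rule exE)
  have M: "\<And>\<alpha> k \<xi>. \<alpha> \<in> ?NA \<Longrightarrow> 2 \<le> k \<Longrightarrow> k \<le> n \<Longrightarrow>
     (\<Sum>\<beta>\<in>A2 m n. M \<alpha> \<beta> * (\<Sum>i<m. real (\<beta> i) * \<xi> i) ^ k) = (if k = mdeg m \<alpha> then (\<Prod>i<m. \<xi> i ^ \<alpha> i) else 0)"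
    using M0 by blast
  define \<Lambda> where "\<Lambda> \<beta> = (\<Sum>\<alpha>\<in>?NA. \<bar>cf \<alpha>\<bar> * fact (mdeg m \<alpha>) / \<bar>D (mdeg m \<alpha>)\<bar> * \<bar>M \<alpha> \<beta>\<bar>)" for \<beta>
  define K where "K = (real n * R) ^ n * (\<Sum>\<beta>\<in>?NA. \<Lambda> \<beta>)"
  have K0: "K \<ge> 0" unfolding K_def \<Lambda>_def using R by (intro mult_nonneg_nonneg sum_nonneg) auto
  define \<eta> where "\<eta> = \<epsilon> / (2 * (K + 1))"
  have \<eta>0: "\<eta> > 0" using e K0 by (simp add: \<eta>_def)
  obtain \<delta> where \<delta>: "\<delta> > 0" "\<And>t. \<bar>t\<bar> < \<delta> \<Longrightarrow> \<bar>\<psi> (b + t) - (\<Sum>l\<le>n. D l / fact l * t ^ l)\<bar> \<le> \<eta> * \<bar>t\<bar> ^ n"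
    using C_n_taylor[OF Cn _ order.refl \<eta>0, of b] n1 unfolding D_def by blast
  define h where "h = min 1 (\<delta> / (real n * R + 1))"
  have nR0: "real n * R \<ge> 0" using R by simp
  have h0: "h > 0" using \<delta> nR0 by (simp add: h_def)
  have h1: "h \<le> 1" by (simp add: h_def)
  have hd: "h * (real n * R) < \<delta>"
  proof -
    have "h * (real n * R) \<le> \<delta> / (real n * R + 1) * (real n * R)"
      using nR0 by (intro mult_right_mono) (auto simp: h_def)
    also have "\<dots> < \<delta>" using \<delta>(1) nR0 by (simp add: field_simps)
    finally show ?thesis .
  qed
  define lam where "lam \<beta> = (\<Sum>\<alpha>\<in>?NA. cf \<alpha> * fact (mdeg m \<alpha>) / (D (mdeg m \<alpha>) * h ^ mdeg m \<alpha>) * M \<alpha> \<beta>)" for \<beta>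
  have lamb: "\<bar>lam \<beta>\<bar> * h ^ n \<le> \<Lambda> \<beta>" for \<beta>
  proof -
    have "\<bar>lam \<beta>\<bar> * h ^ n \<le> (\<Sum>\<alpha>\<in>?NA. \<bar>cf \<alpha> * fact (mdeg m \<alpha>) / (D (mdeg m \<alpha>) * h ^ mdeg m \<alpha>) * M \<alpha> \<beta>\<bar>) * h ^ n"
      unfolding lam_def using h0 by (intro mult_right_mono sum_abs) auto
    also have "\<dots> = (\<Sum>\<alpha>\<in>?NA. \<bar>cf \<alpha>\<bar> * fact (mdeg m \<alpha>) / \<bar>D (mdeg m \<alpha>)\<bar> * \<bar>M \<alpha> \<beta>\<bar> * (h ^ n / h ^ mdeg m \<alpha>))"
      unfolding sum_distrib_right using h0 by (intro sum.cong refl) (simp add: abs_mult abs_divide field_simps)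
    also have "\<dots> \<le> \<Lambda> \<beta>"
      unfolding \<Lambda>_def
    proof (intro sum_mono)
      fix \<alpha> assume a: "\<alpha> \<in> ?NA"
      have "h ^ n \<le> h ^ mdeg m \<alpha>" using a h0 h1 by (intro power_decreasing) (auto simp: A2_iff)
      then have "h ^ n / h ^ mdeg m \<alpha> \<le> 1" using h0 by simp
      then show "\<bar>cf \<alpha>\<bar> * fact (mdeg m \<alpha>) / \<bar>D (mdeg m \<alpha>)\<bar> * \<bar>M \<alpha> \<beta>\<bar> * (h ^ n / h ^ mdeg m \<alpha>)
          \<le> \<bar>cf \<alpha>\<bar> * fact (mdeg m \<alpha>) / \<bar>D (mdeg m \<alpha>)\<bar> * \<bar>M \<alpha> \<beta>\<bar>"
        by (intro mult_left_le) auto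
    qed
    finally show ?thesis .
  qed
  define ell where "ell t = D 1 * h * (\<Sum>\<beta>\<in>?NA. lam \<beta> * real (\<beta> t))" for t
  define v where "v t = cf (\<lambda>l. if l = t then 1 else 0) - ell t" for t
  define V where "V = (\<Sum>t<m. \<bar>v t\<bar>)"
  have V0: "V \<ge> 0" unfolding V_def by (intro sum_nonneg) auto
  define q where "q = V * R"
  define \<eta>1 where "\<eta>1 = \<epsilon> * \<bar>D 1\<bar> / (2 * (q + 1))"
  have VR0: "q \<ge> 0" using V0 R by (simp add: q_def)
  have q1: "q + 1 \<noteq> 0" using VR0 by simp
  have \<eta>10: "\<eta>1 > 0" using e D1 VR0 by (simp add: \<eta>1_def)
  obtain \<delta>1 where \<delta>1: "\<delta>1 > 0" "\<And>t. \<bar>t\<bar> < \<delta>1 \<Longrightarrow> \<bar>\<psi> (b + t) - (\<Sum>l\<le>1. D l / fact l * t ^ l)\<bar> \<le> \<eta>1 * \<bar>t\<bar> ^ 1"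
    using C_n_taylor[OF Cn order.refl n1 \<eta>10, of b] unfolding D_def by blast
  define s where "s = \<delta>1 / (q + 1)"
  have s0: "s > 0" using \<delta>1 VR0 by (simp add: s_def)
  have sd: "s * (q) < \<delta>1" using \<delta>1 VR0 by (simp add: s_def field_simps)
  obtain enum where enum: "bij_betw enum {..<card ?NA} ?NA"
    using ex_bij_betw_nat_finite[OF finite_A2[of m n]] by (auto simp: atLeast0LessThan)
  define a where "a j = (if j = 0 then 1 / (s * D 1) else lam (enum (j - 1)))" for j
  define bb where "bb (j::nat) = b" for j
  define w where "w j t = (if j = 0 then s * v t else h * real (enum (j - 1) t))" for j t
  define c0 where "c0 = cf (\<lambda>_. 0) - D 0 * (\<Sum>\<beta>\<in>?NA. lam \<beta>) - \<psi> b / (s * D 1)"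
  have main: "\<forall>u. (\<forall>t<m. \<bar>u t\<bar> \<le> R) \<longrightarrow>
     \<bar>c0 + (\<Sum>j<card (A2 m n) + 1. a j * \<psi> (bb j + (\<Sum>t<m. w j t * u t)))
        - (\<Sum>\<alpha>\<in>multi_indices m n. cf \<alpha> * (\<Prod>i<m. u i ^ \<alpha> i))\<bar> < \<epsilon>"
  proof (intro allI impI)
    fix u :: "nat \<Rightarrow> real" assume u: "\<forall>t<m. \<bar>u t\<bar> \<le> R"
    let ?dot = "\<lambda>\<beta>. (\<Sum>t<m. real (\<beta> t) * u t)"
    let ?T = "\<lambda>x. (\<Sum>l\<le>n. D l / fact l * x ^ l)"
    define Lu where "Lu = (\<Sum>t<m. v t * u t)"
    have sumN: "(\<Sum>j<card ?NA + 1. a j * \<psi> (bb j + (\<Sum>t<m. w j t * u t)))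
        = 1 / (s * D 1) * \<psi> (b + s * Lu) + (\<Sum>\<beta>\<in>?NA. lam \<beta> * \<psi> (b + h * ?dot \<beta>))"
    proof -
      have "(\<Sum>j<card ?NA + 1. a j * \<psi> (bb j + (\<Sum>t<m. w j t * u t)))
          = a 0 * \<psi> (bb 0 + (\<Sum>t<m. w 0 t * u t)) + (\<Sum>k<card ?NA. a (Suc k) * \<psi> (bb (Suc k) + (\<Sum>t<m. w (Suc k) t * u t)))"
        by (simp only: Suc_eq_plus1[symmetric] sum.lessThan_Suc_shift)
      also have "a 0 * \<psi> (bb 0 + (\<Sum>t<m. w 0 t * u t)) = 1 / (s * D 1) * \<psi> (b + s * Lu)"
        by (simp add: a_def bb_def w_def Lu_def sum_distrib_left mult.assoc)
      also have "(\<Sum>k<card ?NA. a (Suc k) * \<psi> (bb (Suc k) + (\<Sum>t<m. w (Suc k) t * u t)))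
          = (\<Sum>k<card ?NA. (\<lambda>\<beta>. lam \<beta> * \<psi> (b + h * ?dot \<beta>)) (enum k))"
        by (intro sum.cong refl) (simp add: a_def bb_def w_def sum_distrib_left mult.assoc)
      also have "\<dots> = (\<Sum>\<beta>\<in>?NA. lam \<beta> * \<psi> (b + h * ?dot \<beta>))"
        by (rule sum.reindex_bij_betw[OF enum])
      finally show ?thesis .
    qed
    define r1 where "r1 = \<psi> (b + s * Lu) - (D 0 + D 1 * (s * Lu))"
    have Lub: "\<bar>Lu\<bar> \<le> q" unfolding Lu_def q_def V_def using u R by (intro lin_bound) auto
    have sLu: "\<bar>s * Lu\<bar> < \<delta>1"
    proof -
      have "\<bar>s * Lu\<bar> \<le> s * (q)" using s0 Lub by (simp add: abs_mult mult_left_mono)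
      then show ?thesis using sd by linarith
    qed
    have r1b: "\<bar>r1\<bar> \<le> \<eta>1 * (s * (q))"
    proof -
      have "\<bar>r1\<bar> \<le> \<eta>1 * \<bar>s * Lu\<bar>" using \<delta>1(2)[OF sLu] by (simp add: r1_def)
      also have "\<dots> \<le> \<eta>1 * (s * (q))" using \<eta>10 s0 Lub by (intro mult_left_mono) (auto simp: abs_mult)
      finally show ?thesis .
    qed
    have lin_part: "1 / (s * D 1) * \<psi> (b + s * Lu) = \<psi> b / (s * D 1) + Lu + r1 / (s * D 1)"
      using s0 D1 by (simp add: r1_def D0 field_simps)
    have err1: "\<bar>r1 / (s * D 1)\<bar> < \<epsilon> / 2"
    proof -
      have lt: "\<bar>r1\<bar> < \<epsilon> / 2 * (s * \<bar>D 1\<bar>)"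
      proof -
        have eq: "\<eta>1 * (s * q) = (\<epsilon> / 2 * (s * \<bar>D 1\<bar>)) * (q / (q + 1))"
          using q1 by (simp add: \<eta>1_def field_simps)
        have "q / (q + 1) < 1" using VR0 by (simp add: divide_less_eq)
        moreover have "\<epsilon> / 2 * (s * \<bar>D 1\<bar>) > 0" using e s0 D1 by simp
        ultimately have "(\<epsilon> / 2 * (s * \<bar>D 1\<bar>)) * (q / (q + 1)) < (\<epsilon> / 2 * (s * \<bar>D 1\<bar>)) * 1"
          by (intro mult_strict_left_mono)
        then show ?thesis using r1b eq by linarith
      qed
      have "\<bar>r1 / (s * D 1)\<bar> = \<bar>r1\<bar> / (s * \<bar>D 1\<bar>)" using s0 by (simp add: abs_divide abs_mult)
      also have "\<dots> < \<epsilon> / 2" using lt s0 D1 by (simp add: divide_less_eq)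
      finally show ?thesis .
    qed
    define rg where "rg \<beta> = \<psi> (b + h * ?dot \<beta>) - ?T (h * ?dot \<beta>)" for \<beta>
    have rgb: "\<bar>rg \<beta>\<bar> \<le> \<eta> * (h ^ n * (real n * R) ^ n)" if b: "\<beta> \<in> ?NA" for \<beta>
    proof -
      have db: "\<bar>?dot \<beta>\<bar> \<le> real n * R" using dot_bound[OF b u] R by simp
      have "\<bar>h * ?dot \<beta>\<bar> \<le> h * (real n * R)" using db h0 by (simp add: abs_mult mult_left_mono)
      then have lt: "\<bar>h * ?dot \<beta>\<bar> < \<delta>" using hd by linarith
      have "\<bar>rg \<beta>\<bar> \<le> \<eta> * \<bar>h * ?dot \<beta>\<bar> ^ n" using \<delta>(2)[OF lt] by (simp add: rg_def)
      also have "\<dots> \<le> \<eta> * (h ^ n * (real n * R) ^ n)"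
      proof -
        have "\<bar>h * ?dot \<beta>\<bar> ^ n \<le> (h * (real n * R)) ^ n"
          using db h0 by (intro power_mono) (auto simp: abs_mult mult_left_mono)
        then show ?thesis using \<eta>0 by (simp add: power_mult_distrib mult_left_mono)
      qed
      finally show ?thesis .
    qed
    have group: "(\<Sum>\<beta>\<in>?NA. lam \<beta> * \<psi> (b + h * ?dot \<beta>))
        = D 0 * (\<Sum>\<beta>\<in>?NA. lam \<beta>) + (\<Sum>t<m. ell t * u t) + (\<Sum>\<alpha>\<in>?NA. cf \<alpha> * (\<Prod>i<m. u i ^ \<alpha> i))
          + (\<Sum>\<beta>\<in>?NA. lam \<beta> * rg \<beta>)"
    proof -
      have "(\<Sum>\<beta>\<in>?NA. lam \<beta> * \<psi> (b + h * ?dot \<beta>)) = (\<Sum>\<beta>\<in>?NA. lam \<beta> * ?T (h * ?dot \<beta>)) + (\<Sum>\<beta>\<in>?NA. lam \<beta> * rg \<beta>)"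
        by (simp add: rg_def sum.distrib[symmetric] distrib_left[symmetric])
      also have "(\<Sum>\<beta>\<in>?NA. lam \<beta> * ?T (h * ?dot \<beta>))
          = D 0 * (\<Sum>\<beta>\<in>?NA. lam \<beta>) + (\<Sum>t<m. ell t * u t) + (\<Sum>\<alpha>\<in>?NA. cf \<alpha> * (\<Prod>i<m. u i ^ \<alpha> i))"
        unfolding lam_def ell_def
        by (rule shallow_ident[OF n1 _ _ M]) (use bD h0 in \<open>auto simp: D_def\<close>)
      finally show ?thesis .
    qed
    have err2: "\<bar>\<Sum>\<beta>\<in>?NA. lam \<beta> * rg \<beta>\<bar> < \<epsilon> / 2"
    proof -
      have "\<bar>\<Sum>\<beta>\<in>?NA. lam \<beta> * rg \<beta>\<bar> \<le> (\<Sum>\<beta>\<in>?NA. \<bar>lam \<beta>\<bar> * \<bar>rg \<beta>\<bar>)"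
        by (rule order.trans[OF sum_abs]) (simp add: abs_mult)
      also have "\<dots> \<le> (\<Sum>\<beta>\<in>?NA. \<eta> * (real n * R) ^ n * \<Lambda> \<beta>)"
      proof (intro sum_mono)
        fix \<beta> assume b: "\<beta> \<in> ?NA"
        have "\<bar>lam \<beta>\<bar> * \<bar>rg \<beta>\<bar> \<le> \<bar>lam \<beta>\<bar> * (\<eta> * (h ^ n * (real n * R) ^ n))"
          using rgb[OF b] by (intro mult_left_mono) auto
        also have "\<dots> = \<eta> * (real n * R) ^ n * (\<bar>lam \<beta>\<bar> * h ^ n)" by (simp add: mult_ac)
        also have "\<dots> \<le> \<eta> * (real n * R) ^ n * \<Lambda> \<beta>"
          using lamb[of \<beta>] \<eta>0 nR0 by (intro mult_left_mono) auto
        finally show "\<bar>lam \<beta>\<bar> * \<bar>rg \<beta>\<bar> \<le> \<eta> * (real n * R) ^ n * \<Lambda> \<beta>" .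
      qed
      also have "\<dots> = \<eta> * K" by (simp only: sum_distrib_left[symmetric] K_def mult.assoc)
      also have "\<dots> = \<epsilon> / 2 * (K / (K + 1))" using K0 by (simp add: \<eta>_def field_simps)
      also have "\<dots> < \<epsilon> / 2" using e K0 by (simp add: field_simps)
      finally show ?thesis .
    qed
    have eqE: "c0 + (\<Sum>j<card ?NA + 1. a j * \<psi> (bb j + (\<Sum>t<m. w j t * u t)))
          - (\<Sum>\<alpha>\<in>multi_indices m n. cf \<alpha> * (\<Prod>i<m. u i ^ \<alpha> i))
        = r1 / (s * D 1) + (\<Sum>\<beta>\<in>?NA. lam \<beta> * rg \<beta>)"
    proof -
      have "(\<Sum>t<m. cf (\<lambda>l. if l = t then 1 else 0) * u t) = Lu + (\<Sum>t<m. ell t * u t)"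
        by (simp add: Lu_def v_def sum.distrib[symmetric] algebra_simps)
      then show ?thesis
        unfolding sumN lin_part group poly_split[OF n1] c0_def by (simp add: D0)
    qed
    show "\<bar>c0 + (\<Sum>j<card ?NA + 1. a j * \<psi> (bb j + (\<Sum>t<m. w j t * u t)))
          - (\<Sum>\<alpha>\<in>multi_indices m n. cf \<alpha> * (\<Prod>i<m. u i ^ \<alpha> i))\<bar> < \<epsilon>"
    proof -
      have "\<bar>r1 / (s * D 1)\<bar> + \<bar>\<Sum>\<beta>\<in>?NA. lam \<beta> * rg \<beta>\<bar> < \<epsilon> / 2 + \<epsilon> / 2"
        by (rule add_strict_mono[OF err1 err2])
      then have "\<bar>r1 / (s * D 1)\<bar> + \<bar>\<Sum>\<beta>\<in>?NA. lam \<beta> * rg \<beta>\<bar> < \<epsilon>" by simp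
      then have t: "\<bar>r1 / (s * D 1) + (\<Sum>\<beta>\<in>?NA. lam \<beta> * rg \<beta>)\<bar> < \<epsilon>"
        by (rule order.strict_trans1[OF abs_triangle_ineq])
      show ?thesis by (subst eqE) (rule t)
    qed
  qed
  show ?thesis by (rule exI[of _ a], rule exI[of _ bb], rule exI[of _ w], rule exI[of _ c0], rule main)
qed


fun hv :: "(real \<Rightarrow> real) \<Rightarrow> nat list \<Rightarrow> ((nat \<Rightarrow> nat \<Rightarrow> real) \<times> (nat \<Rightarrow> real)) list \<Rightarrow> nat \<Rightarrow> (nat \<Rightarrow> real) \<Rightarrow> (nat \<Rightarrow> real)" where
  "hv \<psi> ds \<theta> 0 x = x"
| "hv \<psi> ds \<theta> (Suc l) x = (\<lambda>i. if i < ds ! Suc l then \<psi> (affine_layer (ds ! l) (ds ! Suc l) (fst (\<theta> ! l)) (snd (\<theta> ! l)) (hv \<psi> ds \<theta> l x) i) else 0)"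

lemma hv_shift:
  "hv \<psi> (d0 # ds) (Wb # \<theta>) (Suc l) x = hv \<psi> ds \<theta> l (\<lambda>i. if i < ds ! 0 then \<psi> (affine_layer d0 (ds ! 0) (fst Wb) (snd Wb) x i) else 0)"
proof (induction l)
  case 0 then show ?case by (simp only: hv.simps nth_Cons_0 nth_Cons_Suc)
next
  case (Suc l)
  have "hv \<psi> (d0 # ds) (Wb # \<theta>) (Suc (Suc l)) x =
    (\<lambda>i. if i < (d0 # ds) ! Suc (Suc l) then \<psi> (affine_layer ((d0 # ds) ! Suc l) ((d0 # ds) ! Suc (Suc l)) (fst ((Wb # \<theta>) ! Suc l)) (snd ((Wb # \<theta>) ! Suc l)) (hv \<psi> (d0 # ds) (Wb # \<theta>) (Suc l) x) i) else 0)"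
    by (simp only: hv.simps)
  also have "\<dots> = (\<lambda>i. if i < ds ! Suc l then \<psi> (affine_layer (ds ! l) (ds ! Suc l) (fst (\<theta> ! l)) (snd (\<theta> ! l))
      (hv \<psi> ds \<theta> l (\<lambda>i. if i < ds ! 0 then \<psi> (affine_layer d0 (ds ! 0) (fst Wb) (snd Wb) x i) else 0)) i) else 0)"
    by (simp only: Suc.IH nth_Cons_Suc)
  also have "\<dots> = hv \<psi> ds \<theta> (Suc l) (\<lambda>i. if i < ds ! 0 then \<psi> (affine_layer d0 (ds ! 0) (fst Wb) (snd Wb) x i) else 0)"
    by (simp only: hv.simps(2))
  finally show ?case .
qed

lemma nn_hv:
  "length ds = Suc k \<Longrightarrow> length \<theta> = k \<Longrightarrow> 1 \<le> k \<Longrightarrow>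
   nn_response \<psi> ds \<theta> x = affine_layer (ds ! (k - 1)) (ds ! k) (fst (\<theta> ! (k - 1))) (snd (\<theta> ! (k - 1))) (hv \<psi> ds \<theta> (k - 1) x)"
proof (induction k arbitrary: ds \<theta> x)
  case 0 then show ?case by simp
next
  case (Suc k)
  obtain d0 ds1 where ds: "ds = d0 # ds1" using Suc.prems(1) by (cases ds) auto
  obtain d1 ds' where ds1: "ds1 = d1 # ds'" using Suc.prems(1) ds by (cases ds1) auto
  obtain Wb \<theta>' where th: "\<theta> = Wb # \<theta>'" using Suc.prems(2) by (cases \<theta>) auto
  show ?case
  proof (cases "k = 0")
    case True
    then have "ds' = []" "\<theta>' = []" using Suc.prems ds ds1 th by auto
    then show ?thesis using ds ds1 th True by simp
  next
    case False
    then have k1: "1 \<le> k" by simp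
    have ne: "ds' \<noteq> []" using Suc.prems(1) ds ds1 False by auto
    define x' where "x' = (\<lambda>i. if i < d1 then \<psi> (affine_layer d0 d1 (fst Wb) (snd Wb) x i) else 0)"
    have "nn_response \<psi> ds \<theta> x = nn_response \<psi> (d1 # ds') \<theta>' x'"
      using ne by (simp add: ds ds1 th x'_def Let_def)
    also have "\<dots> = affine_layer ((d1 # ds') ! (k - 1)) ((d1 # ds') ! k) (fst (\<theta>' ! (k - 1))) (snd (\<theta>' ! (k - 1))) (hv \<psi> (d1 # ds') \<theta>' (k - 1) x')"
      using Suc.IH[of "d1 # ds'" \<theta>' x'] Suc.prems ds ds1 th k1 by simp
    also have "hv \<psi> (d1 # ds') \<theta>' (k - 1) x' = hv \<psi> ds \<theta> k x"
    proof -
      have "hv \<psi> ds \<theta> k x = hv \<psi> (d0 # d1 # ds') (Wb # \<theta>') (Suc (k - 1)) x" using k1 ds ds1 th by simp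
      also have "\<dots> = hv \<psi> (d1 # ds') \<theta>' (k - 1) x'" by (simp only: hv_shift x'_def nth_Cons_0)
      finally show ?thesis by simp
    qed
    finally show ?thesis using k1 ds ds1 th by (cases k) auto
  qed
qed

lemma sum_single:
  fixes v :: "nat \<Rightarrow> real"
  assumes "t < d"
  shows "(\<Sum>j<d. (if j = t then c else 0) * v j) = c * v t"
proof -
  have "(\<Sum>j<d. (if j = t then c else 0) * v j) = (\<Sum>j<d. if t = j then c * v j else 0)"
    by (intro sum.cong refl) auto
  also have "\<dots> = c * v t" using assms by (simp add: sum.delta)
  finally show ?thesis .
qed

lemma sum_restrict:
  fixes f :: "nat \<Rightarrow> real"
  assumes "m \<le> d"
  shows "(\<Sum>t<d. if t < m then f t else 0) = (\<Sum>t<m. f t)"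
proof -
  have "(\<Sum>t<d. if t < m then f t else 0) = (\<Sum>t<m. if t < m then f t else 0)"
    using assms by (intro sum.mono_neutral_right) auto
  also have "\<dots> = (\<Sum>t<m. f t)" by (intro sum.cong refl) auto
  finally show ?thesis .
qed

lemma block_sum:
  fixes f :: "nat \<Rightarrow> real"
  assumes "q * N + N \<le> d"
  shows "(\<Sum>\<nu><d. if q * N \<le> \<nu> \<and> \<nu> < q * N + N then f (\<nu> - q * N) else 0) = (\<Sum>j<N. f j)"
proof -
  have "(\<Sum>\<nu><d. if q * N \<le> \<nu> \<and> \<nu> < q * N + N then f (\<nu> - q * N) else 0)
      = (\<Sum>\<nu>\<in>{q * N..<q * N + N}. if q * N \<le> \<nu> \<and> \<nu> < q * N + N then f (\<nu> - q * N) else 0)"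
    using assms by (intro sum.mono_neutral_right) auto
  also have "\<dots> = (\<Sum>\<nu>\<in>{0 + q * N..<N + q * N}. f (\<nu> - q * N))"
    by (intro sum.cong) (auto simp: add.commute)
  also have "\<dots> = (\<Sum>j\<in>{0..<N}. f j)"
    by (subst sum.shift_bounds_nat_ivl) simp
  finally show ?thesis by (simp add: atLeast0LessThan)
qed


definition netlay :: "nat \<Rightarrow> nat \<Rightarrow> nat \<Rightarrow> nat \<Rightarrow> nat \<Rightarrow> real \<Rightarrow> real \<Rightarrow> real \<Rightarrow> real \<Rightarrow> real
   \<Rightarrow> (nat \<Rightarrow> nat \<Rightarrow> real) \<Rightarrow> (nat \<Rightarrow> nat \<Rightarrow> real) \<Rightarrow> (nat \<Rightarrow> nat \<Rightarrow> nat \<Rightarrow> real) \<Rightarrow> (nat \<Rightarrow> real)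
   \<Rightarrow> nat \<Rightarrow> (nat \<Rightarrow> nat \<Rightarrow> real) \<times> (nat \<Rightarrow> real)" where
"netlay k i0 m r N b0 pD p0 s1 s2 A BB Wt C l =
  (if l < i0 then
     ((\<lambda>t j. if t < m \<and> j = t then (if l = 1 then s1 else 1 / pD) else 0),
      (\<lambda>t. if t < m then (if l = 1 then b0 else b0 - p0 / pD) else 0))
   else if l = i0 then
     ((\<lambda>\<nu> t. if \<nu> < r * N \<and> t < m then Wt (\<nu> div N) (\<nu> mod N) t * (if i0 = 1 then 1 else 1 / (s1 * pD)) else 0),
      (\<lambda>\<nu>. if \<nu> < r * N then BB (\<nu> div N) (\<nu> mod N) + (\<Sum>t<m. Wt (\<nu> div N) (\<nu> mod N) t * (if i0 = 1 then 0 else - p0 / (s1 * pD))) else 0))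
   else if l = Suc i0 then
     ((\<lambda>q \<nu>. if q < r \<and> q * N \<le> \<nu> \<and> \<nu> < q * N + N then (if l = k then 1 else s2) * A q (\<nu> - q * N) else 0),
      (\<lambda>q. if q < r then (if l = k then 1 else s2) * C q + (if l = k then 0 else b0) else 0))
   else
     ((\<lambda>q t. if q < r \<and> t = q then (if l = k then 1 / (s2 * pD) else 1 / pD) else 0),
      (\<lambda>q. if q < r then (if l = k then - p0 / (s2 * pD) else b0 - p0 / pD) else 0)))"

lemma affine_eval: "i < dout \<Longrightarrow> affine_layer din dout W B v i = (\<Sum>j<din. W i j * v j) + B i"
  by (simp add: affine_layer_def)

lemma netval:
  fixes \<psi> :: "real \<Rightarrow> real" and ds :: "nat list" and b0 p0 pD s1 s2 :: real
    and A :: "nat \<Rightarrow> nat \<Rightarrow> real" and BB :: "nat \<Rightarrow> nat \<Rightarrow> real" and Wt :: "nat \<Rightarrow> nat \<Rightarrow> nat \<Rightarrow> real"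
    and C :: "nat \<Rightarrow> real"
  assumes len: "length ds = Suc k" and i01: "1 \<le> i0" and i0k: "i0 < k"
    and m: "m = ds ! 0" and r: "r = ds ! k" and N: "N > 0"
    and wpre: "\<forall>l<i0. m \<le> ds ! l" and wmid: "r * N \<le> ds ! i0"
    and wpost: "\<forall>l. i0 < l \<and> l \<le> k \<longrightarrow> r \<le> ds ! l"
    and pD: "pD \<noteq> 0" and s1: "s1 \<noteq> 0" and s2: "s2 \<noteq> 0"
  defines "\<theta> \<equiv> map (\<lambda>l. netlay k i0 m r N b0 pD p0 s1 s2 A BB Wt C (Suc l)) [0..<k]"
    and "\<Phi>1 \<equiv> \<lambda>y. (\<psi> (b0 + s1 * y) - p0) / (s1 * pD)"
    and "\<Phi>2 \<equiv> \<lambda>y. (\<psi> (b0 + s2 * y) - p0) / (s2 * pD)"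
    and "G \<equiv> \<lambda>q u. C q + (\<Sum>j<N. A q j * \<psi> (BB q j + (\<Sum>t<m. Wt q j t * u t)))"
  shows "length \<theta> = k \<and> (\<forall>q<r. nn_response \<psi> ds \<theta> x q = (\<Phi>2 ^^ (k - 1 - i0)) (G q (\<lambda>t. (\<Phi>1 ^^ (i0 - 1)) (x t))))"
proof -
  let ?L = "netlay k i0 m r N b0 pD p0 s1 s2 A BB Wt C"
  let ?U = "\<lambda>t. (\<Phi>1 ^^ (i0 - 1)) (x t)"
  have lt: "length \<theta> = k" by (simp add: \<theta>_def)
  have th: "\<theta> ! l = ?L (Suc l)" if "l < k" for l using that by (simp add: \<theta>_def)
  have hvS: "hv \<psi> ds \<theta> (Suc l) x i = \<psi> ((\<Sum>j<ds ! l. fst (?L (Suc l)) i j * hv \<psi> ds \<theta> l x j) + snd (?L (Suc l)) i)"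
    if "l < k" "i < ds ! Suc l" for l i
    using that by (simp add: th affine_eval)
  have \<Phi>1s: "s1 * \<Phi>1 y = (\<psi> (b0 + s1 * y) - p0) / pD" for y using s1 by (simp add: \<Phi>1_def)
  have \<Phi>2s: "s2 * \<Phi>2 y = (\<psi> (b0 + s2 * y) - p0) / pD" for y using s2 by (simp add: \<Phi>2_def)
  have H1: "\<forall>t<m. hv \<psi> ds \<theta> l x t = \<psi> (b0 + s1 * (\<Phi>1 ^^ (l - 1)) (x t))" if "1 \<le> l" "l < i0" for l
    using that
  proof (induction l)
    case 0 then show ?case by simp
  next
    case (Suc l)
    show ?case
    proof (intro allI impI)
      fix t assume t: "t < m"
      have lk: "l < k" using Suc.prems i0k by simp
      have tS: "t < ds ! Suc l" using wpre[rule_format, of "Suc l"] Suc.prems t by simp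
      have tl: "t < ds ! l" using wpre[rule_format, of l] Suc.prems t by simp
      have fst: "fst (?L (Suc l)) t j = (if j = t then (if Suc l = 1 then s1 else 1 / pD) else 0)" for j
        using Suc.prems t by (simp add: netlay_def)
      have snd: "snd (?L (Suc l)) t = (if Suc l = 1 then b0 else b0 - p0 / pD)"
        using Suc.prems t by (simp add: netlay_def)
      have "hv \<psi> ds \<theta> (Suc l) x t = \<psi> ((if Suc l = 1 then s1 else 1 / pD) * hv \<psi> ds \<theta> l x t + (if Suc l = 1 then b0 else b0 - p0 / pD))"
        using hvS[OF lk tS] fst snd sum_single[OF tl] by simp
      also have "\<dots> = \<psi> (b0 + s1 * (\<Phi>1 ^^ (Suc l - 1)) (x t))"
      proof (cases "l = 0")
        case True then show ?thesis by (simp add: add.commute)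
      next
        case False
        then have "hv \<psi> ds \<theta> l x t = \<psi> (b0 + s1 * (\<Phi>1 ^^ (l - 1)) (x t))"
          using Suc.IH Suc.prems t by simp
        moreover have "(\<Phi>1 ^^ (Suc l - 1)) (x t) = \<Phi>1 ((\<Phi>1 ^^ (l - 1)) (x t))"
          using False by (cases l) auto
        ultimately have "1 / pD * hv \<psi> ds \<theta> l x t + (b0 - p0 / pD) = b0 + s1 * (\<Phi>1 ^^ (Suc l - 1)) (x t)"
          using pD by (simp add: \<Phi>1s field_simps)
        then have "(if Suc l = 1 then s1 else 1 / pD) * hv \<psi> ds \<theta> l x t + (if Suc l = 1 then b0 else b0 - p0 / pD)
            = b0 + s1 * (\<Phi>1 ^^ (Suc l - 1)) (x t)" using False by simp
        then show ?thesis by (rule arg_cong)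
      qed
      finally show "hv \<psi> ds \<theta> (Suc l) x t = \<psi> (b0 + s1 * (\<Phi>1 ^^ (Suc l - 1)) (x t))" .
    qed
  qed
  have dec: "(if i0 = 1 then 1 else 1 / (s1 * pD)) * hv \<psi> ds \<theta> (i0 - 1) x t + (if i0 = 1 then 0 else - p0 / (s1 * pD)) = ?U t"
    if t: "t < m" for t
  proof (cases "i0 = 1")
    case True then show ?thesis by simp
  next
    case False
    then have "hv \<psi> ds \<theta> (i0 - 1) x t = \<psi> (b0 + s1 * (\<Phi>1 ^^ (i0 - 1 - 1)) (x t))"
      using H1[of "i0 - 1"] i01 t by simp
    moreover have "(\<Phi>1 ^^ (i0 - 1)) (x t) = \<Phi>1 ((\<Phi>1 ^^ (i0 - 1 - 1)) (x t))"
      using False i01 by (cases "i0 - 1") auto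
    ultimately show ?thesis using False s1 pD by (simp add: \<Phi>1_def field_simps)
  qed
  have H2: "hv \<psi> ds \<theta> i0 x \<nu> = \<psi> (BB (\<nu> div N) (\<nu> mod N) + (\<Sum>t<m. Wt (\<nu> div N) (\<nu> mod N) t * ?U t))"
    if \<nu>: "\<nu> < r * N" for \<nu>
  proof -
    obtain l where l: "i0 = Suc l" using i01 by (cases i0) auto
    have lk: "l < k" using l i0k by simp
    have \<nu>d: "\<nu> < ds ! Suc l" using \<nu> wmid l by simp
    have md: "m \<le> ds ! l" using wpre l by simp
    let ?a = "if i0 = 1 then 1 else 1 / (s1 * pD)"
    let ?b = "if i0 = 1 then 0 else - p0 / (s1 * pD)"
    have fst: "fst (?L (Suc l)) \<nu> j = (if j < m then Wt (\<nu> div N) (\<nu> mod N) j * ?a else 0)" for j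
      using \<nu> l by (simp add: netlay_def)
    have snd: "snd (?L (Suc l)) \<nu> = BB (\<nu> div N) (\<nu> mod N) + (\<Sum>t<m. Wt (\<nu> div N) (\<nu> mod N) t * ?b)"
      using \<nu> l by (simp add: netlay_def)
    have "hv \<psi> ds \<theta> i0 x \<nu> = \<psi> ((\<Sum>j<ds ! l. (if j < m then Wt (\<nu> div N) (\<nu> mod N) j * ?a else 0) * hv \<psi> ds \<theta> l x j)
            + (BB (\<nu> div N) (\<nu> mod N) + (\<Sum>t<m. Wt (\<nu> div N) (\<nu> mod N) t * ?b)))"
      using hvS[OF lk \<nu>d] fst snd l by simp
    also have "(\<Sum>j<ds ! l. (if j < m then Wt (\<nu> div N) (\<nu> mod N) j * ?a else 0) * hv \<psi> ds \<theta> l x j)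
        = (\<Sum>j<m. Wt (\<nu> div N) (\<nu> mod N) j * ?a * hv \<psi> ds \<theta> l x j)"
      using sum_restrict[OF md, of "\<lambda>j. Wt (\<nu> div N) (\<nu> mod N) j * ?a * hv \<psi> ds \<theta> l x j"]
      by (simp add: if_distrib[of "\<lambda>z. z * hv \<psi> ds \<theta> l x _"] cong: if_cong)
    also have "(\<Sum>j<m. Wt (\<nu> div N) (\<nu> mod N) j * ?a * hv \<psi> ds \<theta> l x j) + (BB (\<nu> div N) (\<nu> mod N) + (\<Sum>t<m. Wt (\<nu> div N) (\<nu> mod N) t * ?b))
        = BB (\<nu> div N) (\<nu> mod N) + (\<Sum>t<m. Wt (\<nu> div N) (\<nu> mod N) t * (?a * hv \<psi> ds \<theta> (i0 - 1) x t + ?b))"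
      using l by (simp add: sum.distrib distrib_left mult_ac)
    also have "\<dots> = BB (\<nu> div N) (\<nu> mod N) + (\<Sum>t<m. Wt (\<nu> div N) (\<nu> mod N) t * ?U t)"
      using dec by simp
    finally show ?thesis .
  qed
  have Gblk: "(\<Sum>j<N. A q j * hv \<psi> ds \<theta> i0 x (q * N + j)) + C q = G q ?U" if q: "q < r" for q
  proof -
    have "hv \<psi> ds \<theta> i0 x (q * N + j) = \<psi> (BB q j + (\<Sum>t<m. Wt q j t * ?U t))" if j: "j < N" for j
    proof -
      have "q * N + j < r * N"
      proof -
        have "q * N + j < q * N + N" using j by simp
        also have "\<dots> = Suc q * N" by simp
        also have "\<dots> \<le> r * N" using q by (intro mult_right_mono) auto
        finally show ?thesis .
      qed
      moreover have "(q * N + j) div N = q" "(q * N + j) mod N = j" using j N by auto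
      ultimately show ?thesis using H2 by simp
    qed
    then show ?thesis unfolding G_def by (simp add: add.commute)
  qed
  have qNd: "q * N + N \<le> ds ! i0" if "q < r" for q
  proof -
    have "q * N + N = Suc q * N" by simp
    also have "\<dots> \<le> r * N" using that by (intro mult_right_mono) auto
    finally show ?thesis using wmid by simp
  qed
  have P1: "(\<Sum>\<nu><ds ! i0. fst (?L (Suc i0)) q \<nu> * hv \<psi> ds \<theta> i0 x \<nu>) + snd (?L (Suc i0)) q
       = (if Suc i0 = k then 1 else s2) * G q ?U + (if Suc i0 = k then 0 else b0)" if q: "q < r" for q
  proof -
    let ?g = "if Suc i0 = k then 1 else s2"
    have "(\<Sum>\<nu><ds ! i0. fst (?L (Suc i0)) q \<nu> * hv \<psi> ds \<theta> i0 x \<nu>)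
        = (\<Sum>\<nu><ds ! i0. if q * N \<le> \<nu> \<and> \<nu> < q * N + N then ?g * A q (\<nu> - q * N) * hv \<psi> ds \<theta> i0 x (q * N + (\<nu> - q * N)) else 0)"
      using q by (intro sum.cong refl) (auto simp: netlay_def)
    also have "\<dots> = (\<Sum>j<N. ?g * A q j * hv \<psi> ds \<theta> i0 x (q * N + j))"
      by (rule block_sum[OF qNd[OF q]])
    finally have "(\<Sum>\<nu><ds ! i0. fst (?L (Suc i0)) q \<nu> * hv \<psi> ds \<theta> i0 x \<nu>) = ?g * (\<Sum>j<N. A q j * hv \<psi> ds \<theta> i0 x (q * N + j))"
      by (simp add: sum_distrib_left mult_ac)
    moreover have "snd (?L (Suc i0)) q = ?g * C q + (if Suc i0 = k then 0 else b0)"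
      using q by (simp add: netlay_def)
    ultimately show ?thesis using Gblk[OF q] by (simp add: distrib_left[symmetric])
  qed
  have H3: "\<forall>q<r. hv \<psi> ds \<theta> l x q = \<psi> (b0 + s2 * (\<Phi>2 ^^ (l - Suc i0)) (G q ?U))" if "Suc i0 \<le> l" "l < k" for l
    using that
  proof (induction l)
    case 0 then show ?case by simp
  next
    case (Suc l)
    show ?case
    proof (intro allI impI)
      fix q assume q: "q < r"
      have lk: "l < k" using Suc.prems by simp
      have qS: "q < ds ! Suc l" using wpost[rule_format, of "Suc l"] Suc.prems q by simp
      show "hv \<psi> ds \<theta> (Suc l) x q = \<psi> (b0 + s2 * (\<Phi>2 ^^ (Suc l - Suc i0)) (G q ?U))"
      proof (cases "l = i0")
        case True
        have "hv \<psi> ds \<theta> (Suc l) x q = \<psi> ((\<Sum>\<nu><ds ! i0. fst (?L (Suc i0)) q \<nu> * hv \<psi> ds \<theta> i0 x \<nu>) + snd (?L (Suc i0)) q)"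
          using hvS[OF lk qS] True by simp
        also have "\<dots> = \<psi> (s2 * G q ?U + b0)" using P1[OF q] Suc.prems True by simp
        finally show ?thesis using True by (simp add: add.commute)
      next
        case False
        then have li: "Suc i0 \<le> l" using Suc.prems by simp
        have ql: "q < ds ! l" using wpost[rule_format, of l] li q Suc.prems by simp
        have fst: "fst (?L (Suc l)) q t = (if t = q then 1 / pD else 0)" for t
          using q li Suc.prems by (simp add: netlay_def)
        have snd: "snd (?L (Suc l)) q = b0 - p0 / pD"
          using q li Suc.prems by (simp add: netlay_def)
        have e1: "hv \<psi> ds \<theta> (Suc l) x q = \<psi> (1 / pD * hv \<psi> ds \<theta> l x q + (b0 - p0 / pD))"
          using hvS[OF lk qS] fst snd sum_single[OF ql] by simp
        have e2: "hv \<psi> ds \<theta> l x q = \<psi> (b0 + s2 * (\<Phi>2 ^^ (l - Suc i0)) (G q ?U))"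
          using Suc.IH li lk q by simp
        have e3: "(\<Phi>2 ^^ (Suc l - Suc i0)) (G q ?U) = \<Phi>2 ((\<Phi>2 ^^ (l - Suc i0)) (G q ?U))"
        proof -
          have "Suc l - Suc i0 = Suc (l - Suc i0)" using li by simp
          then show ?thesis by (simp only: funpow.simps comp_def)
        qed
        have "1 / pD * hv \<psi> ds \<theta> l x q + (b0 - p0 / pD) = b0 + s2 * (\<Phi>2 ^^ (Suc l - Suc i0)) (G q ?U)"
          using pD e2 e3 by (simp add: \<Phi>2s field_simps)
        then show ?thesis unfolding e1 by (rule arg_cong)
      qed
    qed
  qed
  have OUT: "nn_response \<psi> ds \<theta> x q = (\<Phi>2 ^^ (k - 1 - i0)) (G q ?U)" if q: "q < r" for q
  proof -
    have k1: "1 \<le> k" using i0k by simp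
    have qk: "q < ds ! k" using q r by simp
    have "nn_response \<psi> ds \<theta> x q = (\<Sum>j<ds ! (k - 1). fst (\<theta> ! (k - 1)) q j * hv \<psi> ds \<theta> (k - 1) x j) + snd (\<theta> ! (k - 1)) q"
      using nn_hv[OF len lt k1] qk by (simp add: affine_eval)
    also have "\<theta> ! (k - 1) = ?L k" using th[of "k - 1"] k1 by simp
    finally have o: "nn_response \<psi> ds \<theta> x q = (\<Sum>j<ds ! (k - 1). fst (?L k) q j * hv \<psi> ds \<theta> (k - 1) x j) + snd (?L k) q" .
    show ?thesis
    proof (cases "k = Suc i0")
      case True
      then show ?thesis using o P1[OF q] by simp
    next
      case False
      then have li: "Suc i0 \<le> k - 1" using i0k by simp
      have ql: "q < ds ! (k - 1)" using wpost[rule_format, of "k - 1"] li q i0k by simp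
      have fst: "fst (?L k) q t = (if t = q then 1 / (s2 * pD) else 0)" for t
        using q li False i0k by (simp add: netlay_def)
      have snd: "snd (?L k) q = - p0 / (s2 * pD)"
        using q li False i0k by (simp add: netlay_def)
      have "nn_response \<psi> ds \<theta> x q = 1 / (s2 * pD) * hv \<psi> ds \<theta> (k - 1) x q - p0 / (s2 * pD)"
        using o fst snd sum_single[OF ql] by simp
      also have "hv \<psi> ds \<theta> (k - 1) x q = \<psi> (b0 + s2 * (\<Phi>2 ^^ (k - 1 - Suc i0)) (G q ?U))"
        using H3[of "k - 1"] li q i0k by simp
      also have "(\<Phi>2 ^^ (k - 1 - i0)) (G q ?U) = \<Phi>2 ((\<Phi>2 ^^ (k - 1 - Suc i0)) (G q ?U))"
      proof -
        have "k - 1 - i0 = Suc (k - 1 - Suc i0)" using li by simp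
        then show ?thesis by (simp only: funpow.simps comp_def)
      qed
      ultimately show ?thesis by (simp add: \<Phi>2_def diff_divide_distrib)
    qed
  qed
  show ?thesis using lt OUT by blast
qed


lemma phi_step:
  assumes Cn: "C_n n \<psi>" and n1: "1 \<le> n" and pD: "deriv \<psi> b0 \<noteq> 0" and M: "M \<ge> 0" and e: "e > 0"
  shows "\<exists>s>0. \<forall>y. \<bar>y\<bar> \<le> M \<longrightarrow> \<bar>(\<psi> (b0 + s * y) - \<psi> b0) / (s * deriv \<psi> b0) - y\<bar> \<le> e"
proof -
  let ?d = "deriv \<psi> b0"
  define \<eta> where "\<eta> = e * \<bar>?d\<bar> / (M + 1)"
  have \<eta>0: "\<eta> > 0" using e pD M by (simp add: \<eta>_def)
  obtain \<delta> where \<delta>: "\<delta> > 0" "\<And>t. \<bar>t\<bar> < \<delta> \<Longrightarrow> \<bar>\<psi> (b0 + t) - (\<Sum>l\<le>1. (deriv ^^ l) \<psi> b0 / fact l * t ^ l)\<bar> \<le> \<eta> * \<bar>t\<bar> ^ 1"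
    using C_n_taylor[OF Cn order.refl n1 \<eta>0, of b0] by blast
  define s where "s = \<delta> / (M + 1)"
  have s0: "s > 0" using \<delta> M by (simp add: s_def)
  have "\<bar>(\<psi> (b0 + s * y) - \<psi> b0) / (s * ?d) - y\<bar> \<le> e" if y: "\<bar>y\<bar> \<le> M" for y
  proof -
    have sy: "\<bar>s * y\<bar> < \<delta>"
    proof -
      have "\<bar>s * y\<bar> \<le> s * M" using s0 y by (simp add: abs_mult mult_left_mono)
      also have "\<dots> < \<delta>" using \<delta> M by (simp add: s_def field_simps)
      finally show ?thesis .
    qed
    have r: "\<bar>\<psi> (b0 + s * y) - \<psi> b0 - ?d * (s * y)\<bar> \<le> \<eta> * \<bar>s * y\<bar>"
      using \<delta>(2)[OF sy] by simp
    have "(\<psi> (b0 + s * y) - \<psi> b0) / (s * ?d) - y = (\<psi> (b0 + s * y) - \<psi> b0 - ?d * (s * y)) / (s * ?d)"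
      using s0 pD by (simp add: field_simps)
    then have "\<bar>(\<psi> (b0 + s * y) - \<psi> b0) / (s * ?d) - y\<bar> = \<bar>\<psi> (b0 + s * y) - \<psi> b0 - ?d * (s * y)\<bar> / (s * \<bar>?d\<bar>)"
      using s0 by (simp add: abs_divide abs_mult)
    also have "\<dots> \<le> \<eta> * \<bar>s * y\<bar> / (s * \<bar>?d\<bar>)"
      using r s0 pD by (intro divide_right_mono) auto
    also have "\<dots> = \<eta> * \<bar>y\<bar> / \<bar>?d\<bar>" using s0 by (simp add: abs_mult)
    also have "\<dots> \<le> \<eta> * (M + 1) / \<bar>?d\<bar>"
      using y \<eta>0 pD by (intro divide_right_mono mult_left_mono) auto
    also have "\<dots> = e" using pD M by (simp add: \<eta>_def)
    finally show ?thesis .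
  qed
  then show ?thesis using s0 by blast
qed

lemma iter_close:
  fixes f :: "real \<Rightarrow> real"
  assumes f: "\<And>y. \<bar>y\<bar> \<le> M + 1 \<Longrightarrow> \<bar>f y - y\<bar> \<le> e" and e: "e \<ge> 0" and L: "real L * e \<le> 1"
  shows "\<bar>t\<bar> \<le> M \<Longrightarrow> \<bar>(f ^^ L) t - t\<bar> \<le> real L * e"
  using L
proof (induction L)
  case 0 then show ?case by simp
next
  case (Suc L)
  assume t: "\<bar>t\<bar> \<le> M"
  have Le: "real L * e \<le> 1" using Suc.prems e by (simp add: distrib_right)
  have IH: "\<bar>(f ^^ L) t - t\<bar> \<le> real L * e" using Suc.IH[OF t Le] by simp
  have "\<bar>(f ^^ L) t\<bar> \<le> M + 1" using IH t Le by linarith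
  then have "\<bar>f ((f ^^ L) t) - (f ^^ L) t\<bar> \<le> e" by (rule f)
  then show ?case using IH by (simp add: distrib_right)
qed

lemma phi_iter:
  assumes Cn: "C_n n \<psi>" and n1: "1 \<le> n" and pD: "deriv \<psi> b0 \<noteq> 0" and M: "M \<ge> 0" and e: "e > 0"
  shows "\<exists>s>0. \<forall>t. \<bar>t\<bar> \<le> M \<longrightarrow> \<bar>((\<lambda>y. (\<psi> (b0 + s * y) - \<psi> b0) / (s * deriv \<psi> b0)) ^^ L) t - t\<bar> \<le> e"
proof -
  define e' where "e' = min e 1 / (real L + 1)"
  have e'0: "e' > 0" using e by (simp add: e'_def)
  obtain s where s: "s > 0" "\<And>y. \<bar>y\<bar> \<le> M + 1 \<Longrightarrow> \<bar>(\<psi> (b0 + s * y) - \<psi> b0) / (s * deriv \<psi> b0) - y\<bar> \<le> e'"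
    using phi_step[OF Cn n1 pD _ e'0, of "M + 1"] M by auto
  have Le: "real L * e' \<le> min e 1"
  proof -
    have "real L * e' = min e 1 * (real L / (real L + 1))" by (simp add: e'_def)
    also have "\<dots> \<le> min e 1 * 1" using e by (intro mult_left_mono) auto
    finally show ?thesis by simp
  qed
  have "\<bar>((\<lambda>y. (\<psi> (b0 + s * y) - \<psi> b0) / (s * deriv \<psi> b0)) ^^ L) t - t\<bar> \<le> e" if t: "\<bar>t\<bar> \<le> M" for t
  proof -
    have "\<bar>((\<lambda>y. (\<psi> (b0 + s * y) - \<psi> b0) / (s * deriv \<psi> b0)) ^^ L) t - t\<bar> \<le> real L * e'"
      by (rule iter_close[OF s(2) _ _ t]) (use e'0 Le in auto)
    then show ?thesis using Le by simp
  qed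
  then show ?thesis using s(1) by blast
qed

lemma uc_net:
  fixes \<psi> :: "real \<Rightarrow> real" and A BB :: "nat \<Rightarrow> real" and Wt :: "nat \<Rightarrow> nat \<Rightarrow> real"
  assumes cont: "continuous_on UNIV \<psi>" and R: "R \<ge> 0" and e: "e > 0"
  shows "\<exists>\<eta>>0. \<forall>u u'. (\<forall>t<m. \<bar>u t\<bar> \<le> R) \<longrightarrow> (\<forall>t<m. \<bar>u' t - u t\<bar> \<le> \<eta>) \<longrightarrow>
    \<bar>(\<Sum>j<N. A j * \<psi> (BB j + (\<Sum>t<m. Wt j t * u' t))) - (\<Sum>j<N. A j * \<psi> (BB j + (\<Sum>t<m. Wt j t * u t)))\<bar> < e"
proof -
  define W where "W = (\<Sum>j<N. \<Sum>t<m. \<bar>Wt j t\<bar>)"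
  define M2 where "M2 = (\<Sum>j<N. \<bar>BB j\<bar>) + W * (R + 1)"
  define SA where "SA = (\<Sum>j<N. \<bar>A j\<bar>)"
  have W0: "W \<ge> 0" unfolding W_def by (intro sum_nonneg) auto
  have SA0: "SA \<ge> 0" unfolding SA_def by (intro sum_nonneg) auto
  have Wj: "(\<Sum>t<m. \<bar>Wt j t\<bar>) \<le> W" if "j < N" for j
    unfolding W_def using that by (intro member_le_sum[of j "{..<N}" "\<lambda>j. \<Sum>t<m. \<bar>Wt j t\<bar>"]) (auto intro: sum_nonneg)
  have BBj: "\<bar>BB j\<bar> \<le> (\<Sum>j<N. \<bar>BB j\<bar>)" if "j < N" for j
    using that by (intro member_le_sum) auto
  have "uniformly_continuous_on (cball 0 M2) \<psi>"
    by (rule compact_uniformly_continuous[OF continuous_on_subset[OF cont]]) auto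
  moreover have e'0: "e / (SA + 1) > 0" using e SA0 by simp
  ultimately obtain d where d: "d > 0" "\<And>x x'. x \<in> cball 0 M2 \<Longrightarrow> x' \<in> cball 0 M2 \<Longrightarrow> dist x' x < d \<Longrightarrow> dist (\<psi> x') (\<psi> x) < e / (SA + 1)"
    unfolding uniformly_continuous_on_def by metis
  define \<eta> where "\<eta> = min 1 (d / (W + 1))"
  have \<eta>0: "\<eta> > 0" using d W0 by (simp add: \<eta>_def)
  have "\<bar>(\<Sum>j<N. A j * \<psi> (BB j + (\<Sum>t<m. Wt j t * u' t))) - (\<Sum>j<N. A j * \<psi> (BB j + (\<Sum>t<m. Wt j t * u t)))\<bar> < e"
    if u: "\<forall>t<m. \<bar>u t\<bar> \<le> R" and u': "\<forall>t<m. \<bar>u' t - u t\<bar> \<le> \<eta>" for u u'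
  proof -
    have ps: "\<bar>\<psi> (BB j + (\<Sum>t<m. Wt j t * u' t)) - \<psi> (BB j + (\<Sum>t<m. Wt j t * u t))\<bar> < e / (SA + 1)" if j: "j < N" for j
    proof -
      let ?p = "BB j + (\<Sum>t<m. Wt j t * u t)" and ?p' = "BB j + (\<Sum>t<m. Wt j t * u' t)"
      have b1: "\<bar>\<Sum>t<m. Wt j t * u t\<bar> \<le> W * (R + 1)"
      proof -
        have "\<bar>\<Sum>t<m. Wt j t * u t\<bar> \<le> (\<Sum>t<m. \<bar>Wt j t\<bar> * (R + 1))"
          using u by (intro order.trans[OF sum_abs] sum_mono) (auto simp: abs_mult intro!: mult_left_mono)
        also have "\<dots> \<le> W * (R + 1)" using Wj[OF j] R by (simp add: sum_distrib_right[symmetric] mult_right_mono)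
        finally show ?thesis .
      qed
      have b2: "\<bar>\<Sum>t<m. Wt j t * u' t\<bar> \<le> W * (R + 1)"
      proof -
        have "\<bar>u' t\<bar> \<le> R + 1" if "t < m" for t
        proof -
          have "\<eta> \<le> 1" by (simp add: \<eta>_def)
          then show ?thesis using u u' that by fastforce
        qed
        then have "\<bar>\<Sum>t<m. Wt j t * u' t\<bar> \<le> (\<Sum>t<m. \<bar>Wt j t\<bar> * (R + 1))"
          by (intro order.trans[OF sum_abs] sum_mono) (auto simp: abs_mult intro!: mult_left_mono)
        also have "\<dots> \<le> W * (R + 1)" using Wj[OF j] R by (simp add: sum_distrib_right[symmetric] mult_right_mono)
        finally show ?thesis .
      qed
      have in1: "?p \<in> cball 0 M2" using b1 BBj[OF j] by (simp add: M2_def dist_real_def)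
      have in2: "?p' \<in> cball 0 M2" using b2 BBj[OF j] by (simp add: M2_def dist_real_def)
      have "\<bar>?p' - ?p\<bar> = \<bar>\<Sum>t<m. Wt j t * (u' t - u t)\<bar>" by (simp add: sum_subtractf right_diff_distrib)
      also have "\<dots> \<le> (\<Sum>t<m. \<bar>Wt j t\<bar> * \<eta>)"
        using u' by (intro order.trans[OF sum_abs] sum_mono) (auto simp: abs_mult intro!: mult_left_mono)
      also have "\<dots> \<le> W * \<eta>" using Wj[OF j] \<eta>0 by (simp add: sum_distrib_right[symmetric] mult_right_mono)
      also have "\<dots> < d"
      proof -
        have "W * \<eta> \<le> W * (d / (W + 1))" using W0 by (intro mult_left_mono) (auto simp: \<eta>_def)
        also have "\<dots> < d" using W0 d by (simp add: field_simps)
        finally show ?thesis .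
      qed
      finally have "dist ?p' ?p < d" by (simp add: dist_real_def)
      then show ?thesis using d(2)[OF in1 in2] by (simp add: dist_real_def)
    qed
    have "\<bar>(\<Sum>j<N. A j * \<psi> (BB j + (\<Sum>t<m. Wt j t * u' t))) - (\<Sum>j<N. A j * \<psi> (BB j + (\<Sum>t<m. Wt j t * u t)))\<bar>
        = \<bar>\<Sum>j<N. A j * (\<psi> (BB j + (\<Sum>t<m. Wt j t * u' t)) - \<psi> (BB j + (\<Sum>t<m. Wt j t * u t)))\<bar>"
      by (simp add: sum_subtractf right_diff_distrib)
    also have "\<dots> \<le> (\<Sum>j<N. \<bar>A j\<bar> * (e / (SA + 1)))"
    proof (intro order.trans[OF sum_abs] sum_mono)
      fix j assume j: "j \<in> {..<N}"
      have "\<bar>\<psi> (BB j + (\<Sum>t<m. Wt j t * u' t)) - \<psi> (BB j + (\<Sum>t<m. Wt j t * u t))\<bar> \<le> e / (SA + 1)"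
        using ps[of j] j by simp
      then show "\<bar>A j * (\<psi> (BB j + (\<Sum>t<m. Wt j t * u' t)) - \<psi> (BB j + (\<Sum>t<m. Wt j t * u t)))\<bar> \<le> \<bar>A j\<bar> * (e / (SA + 1))"
        unfolding abs_mult by (rule mult_left_mono) auto
    qed
    also have "\<dots> = SA * (e / (SA + 1))" by (simp only: SA_def sum_distrib_right)
    also have "\<dots> < e" using SA0 e by (simp add: field_simps)
    finally show ?thesis .
  qed
  then show ?thesis using \<eta>0 by blast
qed

lemma poly_bound:
  fixes c :: "(nat \<Rightarrow> nat) \<Rightarrow> real" and x :: "nat \<Rightarrow> real"
  assumes x: "\<forall>t<m. \<bar>x t\<bar> \<le> R"
  shows "\<bar>\<Sum>\<alpha>\<in>multi_indices m n. c \<alpha> * (\<Prod>i<m. x i ^ \<alpha> i)\<bar> \<le> (\<Sum>\<alpha>\<in>multi_indices m n. \<bar>c \<alpha>\<bar> * (\<Prod>i<m. \<bar>R\<bar> ^ \<alpha> i))"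
proof -
  have "\<bar>\<Prod>i<m. x i ^ \<alpha> i\<bar> \<le> (\<Prod>i<m. \<bar>R\<bar> ^ \<alpha> i)" for \<alpha>
  proof -
    have "\<bar>\<Prod>i<m. x i ^ \<alpha> i\<bar> = (\<Prod>i<m. \<bar>x i\<bar> ^ \<alpha> i)" by (simp add: abs_prod power_abs)
    also have "\<dots> \<le> (\<Prod>i<m. \<bar>R\<bar> ^ \<alpha> i)"
      using x by (intro prod_mono conjI power_mono) auto
    finally show ?thesis .
  qed
  then show ?thesis
    by (intro order.trans[OF sum_abs] sum_mono) (auto simp: abs_mult intro!: mult_left_mono)
qed


lemma mi_zero: "multi_indices m 0 = {\<lambda>_. 0}"
proof (intro set_eqI iffI)
  fix \<alpha> assume a: "\<alpha> \<in> multi_indices m 0"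
  then have lo: "\<forall>i<m. \<alpha> i = 0" by (simp add: multi_indices_def)
  have "\<alpha> = (\<lambda>_. 0)"
  proof (rule ext)
    fix i show "\<alpha> i = 0" using lo a by (cases "i < m") (auto simp: multi_indices_def)
  qed
  then show "\<alpha> \<in> {\<lambda>_. 0}" by simp
qed (simp add: multi_indices_def)

lemma main_approx:
  fixes n m r k :: nat
    and \<psi> :: "real \<Rightarrow> real"
    and c :: "(nat \<Rightarrow> nat) \<Rightarrow> nat \<Rightarrow> real"
    and ds :: "nat list"
  assumes psi_Cn: "C_n n \<psi>"
    and psi_nz: "\<exists>x. (deriv ^^ n) \<psi> x \<noteq> 0"
    and len: "length ds = k + 1"
    and pos: "\<forall>l\<le>k. ds ! l > 0"
    and d0: "ds ! 0 = m"
    and dk: "ds ! k = r"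
    and hidden: "\<exists>i. 0 < i \<and> i < k
                   \<and> int (ds ! i) \<ge> int r * (int ((n + m) choose m) - int m)
                   \<and> (\<forall>l<i. ds ! l \<ge> ds ! 0)
                   \<and> (\<forall>l. i < l \<and> l \<le> k \<longrightarrow> ds ! l \<ge> ds ! k)"
    and R: "R > 0" and e: "\<epsilon> > 0"
  shows "\<exists>\<theta>. length \<theta> = k \<and> (\<forall>x. (\<forall>t<m. \<bar>x t\<bar> \<le> R) \<longrightarrow>
           (\<forall>q<r. \<bar>nn_response \<psi> ds \<theta> x q - poly_map m r n c x q\<bar> < \<epsilon>))"
proof -
  obtain i0 where i0: "0 < i0" "i0 < k" and hid: "int (ds ! i0) \<ge> int r * (int ((n + m) choose m) - int m)"
    and wpre0: "\<forall>l<i0. ds ! l \<ge> ds ! 0" and wpost0: "\<forall>l. i0 < l \<and> l \<le> k \<longrightarrow> ds ! l \<ge> ds ! k"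
    using hidden by blast
  have k1: "1 \<le> k" using i0 by simp
  have lenS: "length ds = Suc k" using len by simp
  have Pq: "poly_map m r n c x q = (\<Sum>\<alpha>\<in>multi_indices m n. c \<alpha> q * (\<Prod>i<m. x i ^ \<alpha> i))" if "q < r" for x q
    using that by (simp add: poly_map_def)
  show ?thesis
  proof (cases "n = 0")
    case True
    define Z :: "nat \<Rightarrow> nat \<Rightarrow> real" where "Z = (\<lambda>_ _. 0)"
    define \<theta> where "\<theta> = map (\<lambda>l. if l = k - 1 then (Z, (\<lambda>q. c (\<lambda>_. 0) q)) else (Z, (\<lambda>_. 0))) [0..<k]"
    have lt: "length \<theta> = k" by (simp add: \<theta>_def)
    have "nn_response \<psi> ds \<theta> x q = poly_map m r n c x q" if q: "q < r" for x q
    proof -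
      have th: "\<theta> ! (k - 1) = (Z, (\<lambda>q. c (\<lambda>_. 0) q))" using k1 by (simp add: \<theta>_def)
      have "nn_response \<psi> ds \<theta> x q = c (\<lambda>_. 0) q"
        using nn_hv[OF lenS lt k1] q dk th by (simp add: affine_eval Z_def)
      also have "\<dots> = poly_map m r n c x q" using Pq[OF q] True by (simp add: mi_zero)
      finally show ?thesis .
    qed
    then show ?thesis using lt e by (intro exI[of _ \<theta>]) auto
  next
    case False
    then have n1: "1 \<le> n" by simp
    define \<epsilon>' where "\<epsilon>' = min \<epsilon> 1"
    have e'0: "\<epsilon>' > 0" "\<epsilon>' \<le> \<epsilon>" "\<epsilon>' \<le> 1" using e by (auto simp: \<epsilon>'_def)
    obtain b0 where b0: "\<And>j. 1 \<le> j \<Longrightarrow> j \<le> n \<Longrightarrow> (deriv ^^ j) \<psi> b0 \<noteq> 0"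
      using C_n_point[OF psi_Cn psi_nz n1] by blast
    define pD where "pD = deriv \<psi> b0"
    have pD0: "pD \<noteq> 0" using b0[of 1] n1 by (simp add: pD_def)
    define N where "N = card (A2 m n) + 1"
    have N0: "N > 0" by (simp add: N_def)
    have rN: "r * N \<le> ds ! i0"
    proof -
      have cA: "N + m \<le> (n + m) choose m" using card_A2[OF n1, of m] by (simp add: N_def)
      then have "int N \<le> int ((n + m) choose m) - int m" by simp
      then have "int r * int N \<le> int r * (int ((n + m) choose m) - int m)" by (intro mult_left_mono) auto
      then have "int r * int N \<le> int (ds ! i0)" using hid by linarith
      then have "int (r * N) \<le> int (ds ! i0)" by (simp only: of_nat_mult)
      then show ?thesis by (simp only: of_nat_le_iff)
    qed
    have cont: "continuous_on UNIV \<psi>"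
    proof -
      have "\<psi> differentiable at x" for x using psi_Cn n1 unfolding C_n_def by (metis funpow_0 less_le_trans zero_less_one)
      then show ?thesis by (intro continuous_at_imp_continuous_on) (auto intro: differentiable_imp_continuous_within)
    qed
    have "\<forall>q. \<exists>a bb w c0. \<forall>u. (\<forall>t<m. \<bar>u t\<bar> \<le> R + 1) \<longrightarrow>
        \<bar>c0 + (\<Sum>j<card (A2 m n) + 1. a j * \<psi> (bb j + (\<Sum>t<m. w j t * u t)))
          - (\<Sum>\<alpha>\<in>multi_indices m n. c \<alpha> q * (\<Prod>i<m. u i ^ \<alpha> i))\<bar> < \<epsilon>' / 3"
    proof
      fix q
      show "\<exists>a bb w c0. \<forall>u. (\<forall>t<m. \<bar>u t\<bar> \<le> R + 1) \<longrightarrow>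
        \<bar>c0 + (\<Sum>j<card (A2 m n) + 1. a j * \<psi> (bb j + (\<Sum>t<m. w j t * u t)))
          - (\<Sum>\<alpha>\<in>multi_indices m n. c \<alpha> q * (\<Prod>i<m. u i ^ \<alpha> i))\<bar> < \<epsilon>' / 3"
        by (rule shallow[OF psi_Cn b0 n1]) (use R e'0 in auto)
    qed
    then obtain A where "\<forall>q. \<exists>bb w c0. \<forall>u. (\<forall>t<m. \<bar>u t\<bar> \<le> R + 1) \<longrightarrow>
        \<bar>c0 + (\<Sum>j<card (A2 m n) + 1. A q j * \<psi> (bb j + (\<Sum>t<m. w j t * u t)))
          - (\<Sum>\<alpha>\<in>multi_indices m n. c \<alpha> q * (\<Prod>i<m. u i ^ \<alpha> i))\<bar> < \<epsilon>' / 3"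
      by (rule choice[THEN exE])
    then obtain BB where "\<forall>q. \<exists>w c0. \<forall>u. (\<forall>t<m. \<bar>u t\<bar> \<le> R + 1) \<longrightarrow>
        \<bar>c0 + (\<Sum>j<card (A2 m n) + 1. A q j * \<psi> (BB q j + (\<Sum>t<m. w j t * u t)))
          - (\<Sum>\<alpha>\<in>multi_indices m n. c \<alpha> q * (\<Prod>i<m. u i ^ \<alpha> i))\<bar> < \<epsilon>' / 3"
      by (rule choice[THEN exE])
    then obtain Wt where "\<forall>q. \<exists>c0. \<forall>u. (\<forall>t<m. \<bar>u t\<bar> \<le> R + 1) \<longrightarrow>
        \<bar>c0 + (\<Sum>j<card (A2 m n) + 1. A q j * \<psi> (BB q j + (\<Sum>t<m. Wt q j t * u t)))
          - (\<Sum>\<alpha>\<in>multi_indices m n. c \<alpha> q * (\<Prod>i<m. u i ^ \<alpha> i))\<bar> < \<epsilon>' / 3"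
      by (rule choice[THEN exE])
    then obtain C where shal: "\<forall>q. \<forall>u. (\<forall>t<m. \<bar>u t\<bar> \<le> R + 1) \<longrightarrow>
        \<bar>C q + (\<Sum>j<card (A2 m n) + 1. A q j * \<psi> (BB q j + (\<Sum>t<m. Wt q j t * u t)))
          - (\<Sum>\<alpha>\<in>multi_indices m n. c \<alpha> q * (\<Prod>i<m. u i ^ \<alpha> i))\<bar> < \<epsilon>' / 3"
      by (rule choice[THEN exE])
    define G where "G q u = C q + (\<Sum>j<N. A q j * \<psi> (BB q j + (\<Sum>t<m. Wt q j t * u t)))" for q u
    have Gapp: "\<bar>G q u - (\<Sum>\<alpha>\<in>multi_indices m n. c \<alpha> q * (\<Prod>i<m. u i ^ \<alpha> i))\<bar> < \<epsilon>' / 3"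
      if "\<forall>t<m. \<bar>u t\<bar> \<le> R + 1" for q u
      using shal that by (simp add: G_def N_def)
    have "\<forall>q. \<exists>\<eta>>0. \<forall>u u'. (\<forall>t<m. \<bar>u t\<bar> \<le> R) \<longrightarrow> (\<forall>t<m. \<bar>u' t - u t\<bar> \<le> \<eta>) \<longrightarrow>
        \<bar>(\<Sum>j<N. A q j * \<psi> (BB q j + (\<Sum>t<m. Wt q j t * u' t))) - (\<Sum>j<N. A q j * \<psi> (BB q j + (\<Sum>t<m. Wt q j t * u t)))\<bar> < \<epsilon>' / 3"
    proof
      fix q show "\<exists>\<eta>>0. \<forall>u u'. (\<forall>t<m. \<bar>u t\<bar> \<le> R) \<longrightarrow> (\<forall>t<m. \<bar>u' t - u t\<bar> \<le> \<eta>) \<longrightarrow>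
        \<bar>(\<Sum>j<N. A q j * \<psi> (BB q j + (\<Sum>t<m. Wt q j t * u' t))) - (\<Sum>j<N. A q j * \<psi> (BB q j + (\<Sum>t<m. Wt q j t * u t)))\<bar> < \<epsilon>' / 3"
        by (rule uc_net[OF cont]) (use R e'0 in auto)
    qed
    then obtain \<eta> where \<eta>': "\<forall>q. \<eta> q > 0 \<and> (\<forall>u u'. (\<forall>t<m. \<bar>u t\<bar> \<le> R) \<longrightarrow> (\<forall>t<m. \<bar>u' t - u t\<bar> \<le> \<eta> q) \<longrightarrow>
        \<bar>(\<Sum>j<N. A q j * \<psi> (BB q j + (\<Sum>t<m. Wt q j t * u' t))) - (\<Sum>j<N. A q j * \<psi> (BB q j + (\<Sum>t<m. Wt q j t * u t)))\<bar> < \<epsilon>' / 3)"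
      by (rule choice[THEN exE])
    have \<eta>: "\<And>q. \<eta> q > 0" "\<And>q u u'. (\<forall>t<m. \<bar>u t\<bar> \<le> R) \<Longrightarrow> (\<forall>t<m. \<bar>u' t - u t\<bar> \<le> \<eta> q) \<Longrightarrow>
        \<bar>(\<Sum>j<N. A q j * \<psi> (BB q j + (\<Sum>t<m. Wt q j t * u' t))) - (\<Sum>j<N. A q j * \<psi> (BB q j + (\<Sum>t<m. Wt q j t * u t)))\<bar> < \<epsilon>' / 3"
      using \<eta>' by blast+
    have r0: "r > 0" using pos dk by auto
    define \<eta>0 where "\<eta>0 = Min (\<eta> ` {..<r})"
    have \<eta>00: "\<eta>0 > 0" unfolding \<eta>0_def using r0 \<eta>(1) by (subst Min_gr_iff) auto
    have \<eta>0q: "\<eta>0 \<le> \<eta> q" if "q < r" for q using that by (auto simp: \<eta>0_def)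
    obtain s1 where s1: "s1 > 0" "\<And>t. \<bar>t\<bar> \<le> R \<Longrightarrow> \<bar>((\<lambda>y. (\<psi> (b0 + s1 * y) - \<psi> b0) / (s1 * deriv \<psi> b0)) ^^ (i0 - 1)) t - t\<bar> \<le> \<eta>0"
      using phi_iter[OF psi_Cn n1 _ _ \<eta>00, of b0 R "i0 - 1"] pD0 R by (auto simp: pD_def)
    define Bp where "Bp = (\<Sum>q<r. \<Sum>\<alpha>\<in>multi_indices m n. \<bar>c \<alpha> q\<bar> * (\<Prod>i<m. \<bar>R\<bar> ^ \<alpha> i))"
    have Pb: "\<bar>\<Sum>\<alpha>\<in>multi_indices m n. c \<alpha> q * (\<Prod>i<m. x i ^ \<alpha> i)\<bar> \<le> Bp" if "q < r" "\<forall>t<m. \<bar>x t\<bar> \<le> R" for q x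
    proof -
      have "\<bar>\<Sum>\<alpha>\<in>multi_indices m n. c \<alpha> q * (\<Prod>i<m. x i ^ \<alpha> i)\<bar> \<le> (\<Sum>\<alpha>\<in>multi_indices m n. \<bar>c \<alpha> q\<bar> * (\<Prod>i<m. \<bar>R\<bar> ^ \<alpha> i))"
        by (rule poly_bound[OF that(2)])
      also have "\<dots> \<le> Bp" unfolding Bp_def using that(1)
        by (intro member_le_sum[of q "{..<r}" "\<lambda>q. \<Sum>\<alpha>\<in>multi_indices m n. \<bar>c \<alpha> q\<bar> * (\<Prod>i<m. \<bar>R\<bar> ^ \<alpha> i)"])
           (auto intro!: sum_nonneg mult_nonneg_nonneg prod_nonneg)
      finally show ?thesis .
    qed
    have Bp0: "Bp \<ge> 0" unfolding Bp_def by (auto intro!: sum_nonneg mult_nonneg_nonneg prod_nonneg)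
    have e3: "\<epsilon>' / 3 > 0" using e'0 by simp
    obtain s2 where s2: "s2 > 0" "\<And>t. \<bar>t\<bar> \<le> Bp + 1 \<Longrightarrow> \<bar>((\<lambda>y. (\<psi> (b0 + s2 * y) - \<psi> b0) / (s2 * deriv \<psi> b0)) ^^ (k - 1 - i0)) t - t\<bar> \<le> \<epsilon>' / 3"
      using phi_iter[OF psi_Cn n1 _ _ e3, of b0 "Bp + 1" "k - 1 - i0"] pD0 Bp0 by (auto simp: pD_def)
    define \<theta> where "\<theta> = map (\<lambda>l. netlay k i0 m r N b0 pD (\<psi> b0) s1 s2 A BB Wt C (Suc l)) [0..<k]"
    have NV: "length \<theta> = k \<and> (\<forall>q<r. nn_response \<psi> ds \<theta> x q =
        ((\<lambda>y. (\<psi> (b0 + s2 * y) - \<psi> b0) / (s2 * pD)) ^^ (k - 1 - i0))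
          ((\<lambda>q u. C q + (\<Sum>j<N. A q j * \<psi> (BB q j + (\<Sum>t<m. Wt q j t * u t)))) q
             (\<lambda>t. ((\<lambda>y. (\<psi> (b0 + s1 * y) - \<psi> b0) / (s1 * pD)) ^^ (i0 - 1)) (x t))))" for x
      unfolding \<theta>_def
      by (rule netval[OF lenS _ i0(2) d0[symmetric] dk[symmetric] N0 _ rN _ pD0])
         (use i0 wpre0 wpost0 d0 dk s1 s2 in auto)
    have "\<forall>x. (\<forall>t<m. \<bar>x t\<bar> \<le> R) \<longrightarrow> (\<forall>q<r. \<bar>nn_response \<psi> ds \<theta> x q - poly_map m r n c x q\<bar> < \<epsilon>)"
    proof (intro allI impI)
      fix x q assume x: "\<forall>t<m. \<bar>x t\<bar> \<le> R" and q: "q < r"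
      define U where "U t = ((\<lambda>y. (\<psi> (b0 + s1 * y) - \<psi> b0) / (s1 * pD)) ^^ (i0 - 1)) (x t)" for t
      let ?P = "\<Sum>\<alpha>\<in>multi_indices m n. c \<alpha> q * (\<Prod>i<m. x i ^ \<alpha> i)"
      have out: "nn_response \<psi> ds \<theta> x q = ((\<lambda>y. (\<psi> (b0 + s2 * y) - \<psi> b0) / (s2 * pD)) ^^ (k - 1 - i0)) (G q U)"
        using NV[of x] q by (simp add: G_def U_def)
      have Ux: "\<forall>t<m. \<bar>U t - x t\<bar> \<le> \<eta> q"
        using s1(2) x \<eta>0q[OF q] by (fastforce simp: U_def pD_def)
      have g1: "\<bar>G q U - G q x\<bar> < \<epsilon>' / 3"
        using \<eta>(2)[OF x Ux] by (simp add: G_def)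
      have g2: "\<bar>G q x - ?P\<bar> < \<epsilon>' / 3"
        using Gapp x by (simp add: add_increasing2)
      have GU: "\<bar>G q U - ?P\<bar> < 2 * \<epsilon>' / 3" using g1 g2 by linarith
      have "\<bar>G q U\<bar> \<le> Bp + 1" using GU Pb[OF q x] e'0 by linarith
      then have g3: "\<bar>((\<lambda>y. (\<psi> (b0 + s2 * y) - \<psi> b0) / (s2 * pD)) ^^ (k - 1 - i0)) (G q U) - G q U\<bar> \<le> \<epsilon>' / 3"
        using s2(2) by (simp add: pD_def)
      have "\<bar>nn_response \<psi> ds \<theta> x q - poly_map m r n c x q\<bar> < \<epsilon>'"
        unfolding out Pq[OF q] using g3 GU by linarith
      then show "\<bar>nn_response \<psi> ds \<theta> x q - poly_map m r n c x q\<bar> < \<epsilon>" using e'0 by linarith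
    qed
    then show ?thesis using NV by blast
  qed
qed

theorem theoremD4:
  fixes n m r k :: nat
    and \<psi> :: "real \<Rightarrow> real"
    and c :: "(nat \<Rightarrow> nat) \<Rightarrow> nat \<Rightarrow> real"
    and ds :: "nat list"
  assumes psi_Cn: "C_n n \<psi>"
    and psi_nz: "\<exists>x. (deriv ^^ n) \<psi> x \<noteq> 0"
    and len: "length ds = k + 1"
    and pos: "\<forall>l\<le>k. ds ! l > 0"
    and d0: "ds ! 0 = m"
    and dk: "ds ! k = r"
    and hidden: "\<exists>i. 0 < i \<and> i < k
                   \<and> int (ds ! i) \<ge> int r * (int ((n + m) choose m) - int m)
                   \<and> (\<forall>l<i. ds ! l \<ge> ds ! 0)
                   \<and> (\<forall>l. i < l \<and> l \<le> k \<longrightarrow> ds ! l \<ge> ds ! k)"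
  shows "\<exists>\<theta> :: nat \<Rightarrow> ((nat \<Rightarrow> nat \<Rightarrow> real) \<times> (nat \<Rightarrow> real)) list.
           (\<forall>j. length (\<theta> j) = k) \<and>
           (\<forall>K. compact K \<and> K \<subseteq> euclid m \<longrightarrow>
              (\<forall>\<epsilon>>0. \<exists>J. \<forall>j\<ge>J. \<forall>x\<in>K. \<forall>q<r.
                 \<bar>nn_response \<psi> ds (\<theta> j) x q - poly_map m r n c x q\<bar> < \<epsilon>))"
proof -
  have "\<forall>j::nat. \<exists>\<theta>. length \<theta> = k \<and> (\<forall>x. (\<forall>t<m. \<bar>x t\<bar> \<le> real j + 1) \<longrightarrow>
           (\<forall>q<r. \<bar>nn_response \<psi> ds \<theta> x q - poly_map m r n c x q\<bar> < 1 / (real j + 1)))"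
  proof
    fix j :: nat
    show "\<exists>\<theta>. length \<theta> = k \<and> (\<forall>x. (\<forall>t<m. \<bar>x t\<bar> \<le> real j + 1) \<longrightarrow>
           (\<forall>q<r. \<bar>nn_response \<psi> ds \<theta> x q - poly_map m r n c x q\<bar> < 1 / (real j + 1)))"
      by (rule main_approx[OF psi_Cn psi_nz len pos d0 dk hidden]) auto
  qed
  then obtain \<Theta> where \<Theta>: "\<forall>j::nat. length (\<Theta> j) = k \<and> (\<forall>x. (\<forall>t<m. \<bar>x t\<bar> \<le> real j + 1) \<longrightarrow>
           (\<forall>q<r. \<bar>nn_response \<psi> ds (\<Theta> j) x q - poly_map m r n c x q\<bar> < 1 / (real j + 1)))"
    by (rule choice[THEN exE])
  have conv: "\<forall>\<epsilon>>0. \<exists>J. \<forall>j\<ge>J. \<forall>x\<in>K. \<forall>q<r. \<bar>nn_response \<psi> ds (\<Theta> j) x q - poly_map m r n c x q\<bar> < \<epsilon>"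
    if K: "compact K" for K :: "(nat \<Rightarrow> real) set"
  proof (intro allI impI)
    fix \<epsilon> :: real assume e: "\<epsilon> > 0"
    have "\<forall>t. \<exists>B. \<forall>x\<in>K. \<bar>x t\<bar> \<le> B"
    proof
      fix t :: nat
      have "compact ((\<lambda>x. x t) ` K)"
        by (rule compact_continuous_image[OF continuous_on_subset[OF continuous_on_product_coordinates] K]) simp
      then have "bounded ((\<lambda>x. x t) ` K)" by (rule compact_imp_bounded)
      then obtain B where "\<forall>y\<in>(\<lambda>x. x t) ` K. norm y \<le> B" unfolding bounded_iff by blast
      then show "\<exists>B. \<forall>x\<in>K. \<bar>x t\<bar> \<le> B" by auto
    qed
    then obtain B where B: "\<forall>t. \<forall>x\<in>K. \<bar>x t\<bar> \<le> B t" by (rule choice[THEN exE])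
    define RK where "RK = (\<Sum>t<m. \<bar>B t\<bar>)"
    have RK: "\<bar>x t\<bar> \<le> RK" if "x \<in> K" "t < m" for x t
    proof -
      have "\<bar>x t\<bar> \<le> B t" using B that(1) by blast
      also have "\<dots> \<le> \<bar>B t\<bar>" by simp
      also have "\<bar>B t\<bar> \<le> RK" unfolding RK_def using that(2) by (intro member_le_sum) auto
      finally show ?thesis .
    qed
    define J where "J = nat \<lceil>max RK (1 / \<epsilon>)\<rceil>"
    have "\<forall>j\<ge>J. \<forall>x\<in>K. \<forall>q<r. \<bar>nn_response \<psi> ds (\<Theta> j) x q - poly_map m r n c x q\<bar> < \<epsilon>"
    proof (intro allI impI ballI)
      fix j x q assume j: "J \<le> j" and x: "x \<in> K" and q: "q < r"
      have "max RK (1 / \<epsilon>) \<le> real J" unfolding J_def by linarith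
      then have jb: "RK \<le> real j" "1 / \<epsilon> \<le> real j" using j by auto
      have xb: "\<forall>t<m. \<bar>x t\<bar> \<le> real j + 1" using RK[OF x] jb by fastforce
      have "\<bar>nn_response \<psi> ds (\<Theta> j) x q - poly_map m r n c x q\<bar> < 1 / (real j + 1)"
        using \<Theta> xb q by blast
      also have "1 / (real j + 1) < \<epsilon>"
      proof -
        have "1 / \<epsilon> < real j + 1" using jb by linarith
        then show ?thesis using e by (simp add: field_simps)
      qed
      finally show "\<bar>nn_response \<psi> ds (\<Theta> j) x q - poly_map m r n c x q\<bar> < \<epsilon>" .
    qed
    then show "\<exists>J. \<forall>j\<ge>J. \<forall>x\<in>K. \<forall>q<r. \<bar>nn_response \<psi> ds (\<Theta> j) x q - poly_map m r n c x q\<bar> < \<epsilon>"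
      by blast
  qed
  show ?thesis
    by (rule exI[of _ \<Theta>]) (use \<Theta> conv in blast)
qed


end
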